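(* Let $G$ be a finite simple graph and $H$ a subgraph of $G$. Then $a_i(H)\le a_i(G)$ for all $i\ge0$. In particular, if $H$ is a spanning subgraph of $G$, then $a(H)\le a(G)$.
   Context: All graphs are finite simple graphs; $G|_I$ is the induced subgraph on $I\subseteq V(G)$. The signed $a$-number: $sa(\emptyset)=1$ for the null graph; if $G$ has connected components $G_1,\dots,G_\ell$, $sa(G)=\prod_k sa(G_k)$; if $G$ is connected and nonempty, $sa(G)=-\sum_{I\subsetneq V(G)}sa(G|_I)$ when $|V(G)|$ is even and $sa(G)=0$ when $|V(G)|$ is odd. The $a$-number is $a(G)=|sa(G)|$; $a_i(G)=\sum_{I\subseteq V(G),\,|I|=2i}a(G|_I)$. *)

theory Defs
  imports Main
begin

type_synonym 'a graph = "'a set \<times> 'a set set"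

definition verts :: "'a graph \<Rightarrow> 'a set" where "verts G = fst G"
definition edges :: "'a graph \<Rightarrow> 'a set set" where "edges G = snd G"

definition fin_simple_graph :: "'a graph \<Rightarrow> bool" where
  "fin_simple_graph G \<longleftrightarrow> finite (verts G) \<and>
     (\<forall>e\<in>edges G. e \<subseteq> verts G \<and> card e = 2)"

definition subgraph :: "'a graph \<Rightarrow> 'a graph \<Rightarrow> bool" where
  "subgraph H G \<longleftrightarrow> fin_simple_graph H \<and> fin_simple_graph G \<and>
     verts H \<subseteq> verts G \<and> edges H \<subseteq> edges G"

definition spanning_subgraph :: "'a graph \<Rightarrow> 'a graph \<Rightarrow> bool" where
  "spanning_subgraph H G \<longleftrightarrow> subgraph H G \<and> verts H = verts G"

definition induced :: "'a graph \<Rightarrow> 'a set \<Rightarrow> 'a graph" where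
  "induced G I = (I, {e \<in> edges G. e \<subseteq> I})"

definition adj :: "'a graph \<Rightarrow> 'a \<Rightarrow> 'a \<Rightarrow> bool" where
  "adj G u v \<longleftrightarrow> {u, v} \<in> edges G \<and> u \<in> verts G \<and> v \<in> verts G"

definition reach :: "'a graph \<Rightarrow> 'a \<Rightarrow> 'a \<Rightarrow> bool" where
  "reach G = (adj G)\<^sup>*\<^sup>*"

definition connected_graph :: "'a graph \<Rightarrow> bool" where
  "connected_graph G \<longleftrightarrow> (\<forall>u\<in>verts G. \<forall>v\<in>verts G. reach G u v)"

definition component :: "'a graph \<Rightarrow> 'a \<Rightarrow> 'a set" where
  "component G v = {u \<in> verts G. reach G v u}"

definition components :: "'a graph \<Rightarrow> 'a set set" where
  "components G = component G ` verts G"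

lemma adj_sym: "adj G u v \<Longrightarrow> adj G v u"
  unfolding adj_def by (simp add: insert_commute)

lemma reach_sym: "reach G u v \<Longrightarrow> reach G v u"
  unfolding reach_def
proof (induction rule: rtranclp_induct)
  case base then show ?case by simp
next
  case (step y z)
  then show ?case using adj_sym by (metis converse_rtranclp_into_rtranclp)
qed

lemma reach_trans: "reach G u v \<Longrightarrow> reach G v w \<Longrightarrow> reach G u w"
  unfolding reach_def by simp

lemma component_psubset:
  assumes "\<not> connected_graph G" "v \<in> verts G"
  shows "component G v \<subset> verts G"
proof -
  obtain a b where ab: "a \<in> verts G" "b \<in> verts G" "\<not> reach G a b"
    using assms(1) unfolding connected_graph_def by blast
  have "component G v \<noteq> verts G"
  proof
    assume "component G v = verts G"
    then have "reach G v a" "reach G v b" using ab unfolding component_def by blast+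
    then show False using ab reach_sym reach_trans by metis
  qed
  then show ?thesis unfolding component_def by blast
qed

text \<open>The signed a-number, by recursion on the number of vertices.
 (Value 0 on infinite vertex sets, which never occurs for finite graphs.)\<close>
function sa :: "'a graph \<Rightarrow> int" where
  "sa G = (if \<not> finite (verts G) then 0
           else if verts G = {} then 1
           else if connected_graph G then
             (if even (card (verts G))
              then - (\<Sum>I\<in>{I. I \<subset> verts G}. sa (induced G I))
              else 0)
           else (\<Prod>C\<in>components G. sa (induced G C)))"
  by pat_completeness auto
termination
proof (relation "measure (\<lambda>G. card (verts G))", goal_cases)
  case 1 then show ?case by simp
next
  case (2 G I) then show ?case by (simp add: induced_def verts_def psubset_card_mono)
next
  case (3 G C)
  then obtain v where v: "v \<in> verts G" "C = component G v"
    unfolding components_def by blast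
  have "C \<subset> verts G" using component_psubset[OF _ v(1)] 3 v(2) by blast
  then have "card C < card (verts G)" using 3 psubset_card_mono by blast
  then show ?case by (simp add: induced_def verts_def)
qed

definition a_num :: "'a graph \<Rightarrow> nat" where
  "a_num G = nat \<bar>sa G\<bar>"

definition a_i :: "'a graph \<Rightarrow> nat \<Rightarrow> nat" where
  "a_i G i = (\<Sum>I\<in>{I. I \<subseteq> verts G \<and> card I = 2 * i}. a_num (induced G I))"

end

theory Submission
  imports Defs
begin


declare sa.simps[simp del]

definition sep :: "'a graph \<Rightarrow> 'a set \<Rightarrow> bool" where
  "sep G U \<longleftrightarrow> U \<subseteq> verts G \<and> (\<forall>x\<in>U. \<forall>y\<in>verts G - U. \<not> adj G x y)"

definition evg :: "'a graph \<Rightarrow> bool" where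
  "evg G \<longleftrightarrow> (\<forall>U. sep G U \<longrightarrow> even (card U))"

definition O1 :: "'a graph \<Rightarrow> bool" where
  "O1 G \<longleftrightarrow> connected_graph G \<and> odd (card (verts G))"

lemma verts_induced[simp]: "verts (induced G I) = I"
  by (simp add: induced_def verts_def)

lemma edges_induced[simp]: "edges (induced G I) = {e \<in> edges G. e \<subseteq> I}"
  by (simp add: induced_def edges_def)

lemma adj_induced: "adj (induced G T) x y \<longleftrightarrow> {x,y} \<in> edges G \<and> x \<in> T \<and> y \<in> T"
  by (auto simp: adj_def)

lemma adj_verts: "adj G x y \<Longrightarrow> x \<in> verts G \<and> y \<in> verts G"
  by (simp add: adj_def)

lemma induced_induced: "C \<subseteq> A \<Longrightarrow> induced (induced G A) C = induced G C"
  by (auto simp: induced_def verts_def edges_def)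

lemma adj_induced_self: "adj (induced G (verts G)) = adj G"
  by (auto simp: adj_def fun_eq_iff)

lemma reach_induced_self: "reach (induced G (verts G)) = reach G"
  by (simp add: reach_def adj_induced_self)

lemma connected_induced_self: "connected_graph (induced G (verts G)) = connected_graph G"
  by (simp add: connected_graph_def reach_induced_self)

lemma component_induced_self: "component (induced G (verts G)) = component G"
  by (simp add: component_def reach_induced_self fun_eq_iff)

lemma components_induced_self: "components (induced G (verts G)) = components G"
  by (simp add: components_def component_induced_self)

lemma sep_induced_self: "sep (induced G (verts G)) = sep G"
  by (simp add: sep_def adj_induced_self fun_eq_iff)

lemma evg_induced_self: "evg (induced G (verts G)) = evg G"
  by (simp add: evg_def sep_induced_self)

lemma reach_refl[simp]: "reach G x x"
  by (simp add: reach_def)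

lemma reach_step: "reach G x y \<Longrightarrow> adj G y z \<Longrightarrow> reach G x z"
  unfolding reach_def by (rule rtranclp.rtrancl_into_rtrancl)

lemma reach_mono:
  assumes "\<And>x y. adj G x y \<Longrightarrow> adj G' x y" "reach G x y"
  shows "reach G' x y"
  using assms(2) unfolding reach_def
proof (induction rule: rtranclp_induct)
  case base then show ?case by simp
next
  case (step y z) then show ?case using assms(1) by (meson rtranclp.rtrancl_into_rtrancl)
qed

lemma reach_closed:
  assumes "sep G U" "x \<in> U" "reach G x y"
  shows "y \<in> U"
  using assms(3) unfolding reach_def
proof (induction rule: rtranclp_induct)
  case base then show ?case using assms(2) by simp
next
  case (step y z)
  then show ?case using assms(1) adj_verts[of G y z] unfolding sep_def by blast
qed

lemma reach_closed_induced:
  assumes "sep G U" "x \<in> U" "reach G x y"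
  shows "reach (induced G U) x y"
  using assms(3) unfolding reach_def
proof (induction rule: rtranclp_induct)
  case base then show ?case by simp
next
  case (step y z)
  have "y \<in> U" using reach_closed[OF assms(1,2)] step(1) unfolding reach_def by blast
  moreover have "z \<in> U" using reach_closed[OF assms(1,2)] step(1,2) reach_step unfolding reach_def
    by (metis reach_def)
  ultimately have "adj (induced G U) y z" using step(2) by (auto simp: adj_def)
  then show ?case using step(3) by (meson rtranclp.rtrancl_into_rtrancl)
qed

lemma reach_induced_sub:
  assumes "reach (induced G T) x y" "T \<subseteq> T'"
  shows "reach (induced G T') x y"
  by (rule reach_mono[OF _ assms(1)]) (use assms(2) in \<open>auto simp: adj_induced\<close>)

lemma component_sep: "sep G (component G x)"
  unfolding sep_def component_def
  using reach_step adj_verts by fastforce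

lemma component_sub: "component G x \<subseteq> verts G"
  by (auto simp: component_def)

lemma component_self: "x \<in> verts G \<Longrightarrow> x \<in> component G x"
  by (simp add: component_def)

lemma connected_sep:
  assumes "connected_graph G" "sep G U"
  shows "U = {} \<or> U = verts G"
proof (cases "U = {}")
  case False
  then obtain x where x: "x \<in> U" by blast
  have "verts G \<subseteq> U"
  proof
    fix y assume "y \<in> verts G"
    moreover have "x \<in> verts G" using x assms(2) by (auto simp: sep_def)
    ultimately have "reach G x y" using assms(1) by (simp add: connected_graph_def)
    then show "y \<in> U" using reach_closed[OF assms(2) x] by blast
  qed
  then show ?thesis using assms(2) by (auto simp: sep_def)
qed simp

lemma sep_connected:
  assumes "\<And>U. sep G U \<Longrightarrow> U = {} \<or> U = verts G"
  shows "connected_graph G"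
  unfolding connected_graph_def
proof (intro ballI)
  fix u v assume u: "u \<in> verts G" and v: "v \<in> verts G"
  have "component G u = verts G" using assms[OF component_sep[of G u]] component_self[OF u] by blast
  then show "reach G u v" using v by (auto simp: component_def)
qed

lemma sep_compl: "sep G U \<Longrightarrow> sep G (verts G - U)"
  unfolding sep_def by (metis Diff_iff Diff_subset adj_sym)

lemma component_reach_iff:
  assumes "reach G x y"
  shows "component G y = component G x"
  using assms reach_sym reach_trans unfolding component_def by meson

lemma sep_component_eq:
  assumes "sep G A" "v \<in> A"
  shows "component G v = component (induced G A) v"
proof -
  have A: "A \<subseteq> verts G" using assms(1) by (simp add: sep_def)
  show ?thesis unfolding component_def
  proof (auto)
    fix u assume "u \<in> verts G" "reach G v u"
    then show "u \<in> A" using reach_closed[OF assms] by blast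
  next
    fix u assume "u \<in> verts G" "reach G v u"
    then show "reach (induced G A) v u" using reach_closed_induced[OF assms] by blast
  next
    fix u assume "u \<in> A" then show "u \<in> verts G" using A by blast
  next
    fix u assume "reach (induced G A) v u"
    then show "reach G v u" by (rule reach_mono[rotated]) (use A in \<open>auto simp: adj_def\<close>)
  qed
qed



lemma sep_self: "sep G (verts G)"
  by (simp add: sep_def)

lemma evg_card: "evg G \<Longrightarrow> even (card (verts G))"
  using sep_self[of G] unfolding evg_def by blast

lemma odd_not_evg: "odd (card (verts G)) \<Longrightarrow> \<not> evg G"
  using evg_card by blast

lemma evg_empty: "verts G = {} \<Longrightarrow> evg G"
  by (auto simp: evg_def sep_def)

lemma connected_even_evg: "connected_graph G \<Longrightarrow> even (card (verts G)) \<Longrightarrow> evg G"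
  unfolding evg_def
proof (intro allI impI)
  fix U assume "connected_graph G" "even (card (verts G))" "sep G U"
  then show "even (card U)" using connected_sep[of G U] by auto
qed

lemma sep_induced_to: 
  assumes "sep G A" "sep (induced G A) W"
  shows "sep G W"
  unfolding sep_def
proof (intro conjI ballI)
  show "W \<subseteq> verts G" using assms by (auto simp: sep_def)
next
  fix x y assume x: "x \<in> W" and y: "y \<in> verts G - W"
  have xA: "x \<in> A" using assms(2) x by (auto simp: sep_def)
  show "\<not> adj G x y"
  proof (cases "y \<in> A")
    case True
    then show ?thesis using assms(2) x y xA by (auto simp: sep_def adj_def)
  next
    case False
    then show ?thesis using assms(1) xA y by (auto simp: sep_def)
  qed
qed

lemma evg_induced_sep: "sep G A \<Longrightarrow> evg G \<Longrightarrow> evg (induced G A)"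
  unfolding evg_def using sep_induced_to by blast

lemma sa_eq: "sa G = (if \<not> finite (verts G) then 0
           else if verts G = {} then 1
           else if connected_graph G then
             (if even (card (verts G))
              then - (\<Sum>I\<in>{I. I \<subset> verts G}. sa (induced G I))
              else 0)
           else (\<Prod>C\<in>components G. sa (induced G C)))"
  by (rule sa.simps)

lemma sa_induced_self: "sa (induced G (verts G)) = sa G"
proof -
  let ?H = "induced G (verts G)"
  have s: "\<And>I. I \<subseteq> verts G \<Longrightarrow> induced ?H I = induced G I" by (rule induced_induced)
  have a: "(\<Sum>I\<in>{I. I \<subset> verts G}. sa (induced ?H I)) = (\<Sum>I\<in>{I. I \<subset> verts G}. sa (induced G I))"
    by (rule sum.cong) (auto simp: s)
  have b: "(\<Prod>C\<in>components G. sa (induced ?H C)) = (\<Prod>C\<in>components G. sa (induced G C))"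
    by (rule prod.cong) (auto simp: s components_def component_sub)
  show ?thesis
    unfolding sa_eq[of ?H] sa_eq[of G]
    using a b by (simp add: connected_induced_self components_induced_self)
qed

lemma sa_empty: "verts G = {} \<Longrightarrow> sa G = 1"
  by (subst sa_eq) simp

lemma comp_prod:
  assumes "finite (verts G)"
  shows "sa G = (\<Prod>C\<in>components G. sa (induced G C))"
proof (cases "verts G = {}")
  case True
  then show ?thesis by (simp add: sa_empty components_def)
next
  case ne: False
  show ?thesis
  proof (cases "connected_graph G")
    case True
    have "components G = {verts G}"
    proof -
      have "\<And>v. v \<in> verts G \<Longrightarrow> component G v = verts G"
        using True unfolding component_def connected_graph_def by auto
      then show ?thesis using ne unfolding components_def by auto
    qed
    then show ?thesis by (simp add: sa_induced_self)
  next
    case False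
    then show ?thesis using assms ne by (subst sa_eq) simp
  qed
qed

lemma components_sub: "C \<in> components G \<Longrightarrow> C \<subseteq> verts G"
  by (auto simp: components_def component_def)

lemma components_ne: "C \<in> components G \<Longrightarrow> C \<noteq> {}"
  by (auto simp: components_def component_def)

lemma finite_components: "finite (verts G) \<Longrightarrow> finite (components G)"
  by (simp add: components_def)

lemma sep_prod:
  assumes fin: "finite (verts G)" and sA: "sep G A"
  shows "sa G = sa (induced G A) * sa (induced G (verts G - A))"
proof -
  let ?B = "verts G - A"
  have sB: "sep G ?B" using sep_compl[OF sA] .
  have AV: "A \<subseteq> verts G" using sA by (simp add: sep_def)
  have cA: "component G ` A = components (induced G A)"
    unfolding components_def using sep_component_eq[OF sA] by simp
  have cB: "component G ` ?B = components (induced G ?B)"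
    unfolding components_def using sep_component_eq[OF sB] by simp
  have VAB: "verts G = A \<union> ?B" using AV by blast
  have "components G = component G ` A \<union> component G ` ?B"
    unfolding components_def by (subst VAB) (rule image_Un)
  then have cU: "components G = components (induced G A) \<union> components (induced G ?B)"
    using cA cB by simp
  have disj: "components (induced G A) \<inter> components (induced G ?B) = {}"
  proof (rule ccontr)
    assume "components (induced G A) \<inter> components (induced G ?B) \<noteq> {}"
    then obtain C where C1: "C \<in> components (induced G A)" and C2: "C \<in> components (induced G ?B)" by blast
    have "C \<subseteq> A" using components_sub[OF C1] by simp
    moreover have "C \<subseteq> ?B" using components_sub[OF C2] by simp
    ultimately have "C = {}" by blast
    then show False using components_ne[OF C1] by simp
  qed
  have finA: "finite A" using fin AV finite_subset by blast
  have finB: "finite ?B" using fin by simp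
  have "sa G = (\<Prod>C\<in>components G. sa (induced G C))" by (rule comp_prod[OF fin])
  also have "\<dots> = (\<Prod>C\<in>components (induced G A). sa (induced G C)) * (\<Prod>C\<in>components (induced G ?B). sa (induced G C))"
    unfolding cU by (rule prod.union_disjoint) (use finA finB disj in \<open>auto intro: finite_components\<close>)
  also have "(\<Prod>C\<in>components (induced G A). sa (induced G C)) = (\<Prod>C\<in>components (induced G A). sa (induced (induced G A) C))"
    by (rule prod.cong) (auto simp: induced_induced dest: components_sub)
  also have "\<dots> = sa (induced G A)" using comp_prod[of "induced G A"] finA by simp
  also have "(\<Prod>C\<in>components (induced G ?B). sa (induced G C)) = (\<Prod>C\<in>components (induced G ?B). sa (induced (induced G ?B) C))"
    by (rule prod.cong) (auto simp: induced_induced dest: components_sub)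
  also have "\<dots> = sa (induced G ?B)" using comp_prod[of "induced G ?B"] finB by simp
  finally show ?thesis .
qed

lemma nontrivial_sep:
  assumes "\<not> connected_graph G" "verts G \<noteq> {}"
  obtains A where "sep G A" "A \<noteq> {}" "A \<subset> verts G"
proof -
  obtain v where v: "v \<in> verts G" using assms(2) by blast
  have "component G v \<subset> verts G" using component_psubset[OF assms(1) v] .
  moreover have "component G v \<noteq> {}" using component_self[OF v] by blast
  ultimately show ?thesis using that[OF component_sep[of G v]] by simp
qed

lemma sa_odd:
  assumes "finite (verts G)" "odd (card (verts G))"
  shows "sa G = 0"
  using assms
proof (induction "card (verts G)" arbitrary: G rule: less_induct)
  case less
  have ne: "verts G \<noteq> {}" using less.prems(2) by auto
  show ?case
  proof (cases "connected_graph G")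
    case True
    then show ?thesis using less.prems ne by (subst sa_eq) simp
  next
    case False
    obtain A where A: "sep G A" "A \<noteq> {}" "A \<subset> verts G" using nontrivial_sep[OF False ne] by blast
    have finA: "finite A" using A(3) less.prems(1) finite_subset by blast
    have cA: "card A < card (verts G)" using A(3) less.prems(1) psubset_card_mono by blast
    have cd: "card (verts G - A) = card (verts G) - card A"
      by (rule card_Diff_subset[OF finA psubset_imp_subset[OF A(3)]])
    have cpos: "card A > 0" using finA A(2) by (simp add: card_gt_0_iff)
    have cle: "card A \<le> card (verts G)" using cA by simp
    have cB: "card (verts G - A) < card (verts G)" using cd cpos cle by simp
    have sum: "card A + card (verts G - A) = card (verts G)" using cd cle by simp
    have "sa G = sa (induced G A) * sa (induced G (verts G - A))" by (rule sep_prod[OF less.prems(1) A(1)])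
    moreover have "odd (card A) \<or> odd (card (verts G - A))" using sum less.prems(2) by presburger
    ultimately show ?thesis
      using less.hyps[of "induced G A"] less.hyps[of "induced G (verts G - A)"] cA cB finA less.prems(1)
      by auto
  qed
qed

lemma sa_nev:
  assumes "finite (verts G)" "\<not> evg G"
  shows "sa G = 0"
proof -
  obtain U where U: "sep G U" "odd (card U)" using assms(2) by (auto simp: evg_def)
  have finU: "finite U" using U(1) assms(1) by (meson finite_subset sep_def)
  have "sa G = sa (induced G U) * sa (induced G (verts G - U))" by (rule sep_prod[OF assms(1) U(1)])
  moreover have "sa (induced G U) = 0" using sa_odd[of "induced G U"] finU U(2) by simp
  ultimately show ?thesis by simp
qed

definition Zs :: "'a graph \<Rightarrow> int" where
  "Zs G = (\<Sum>I\<in>Pow (verts G). sa (induced G I))"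

definition f :: "'a graph \<Rightarrow> int" where
  "f G = (if verts G = {} then 1 else - (\<Sum>I\<in>{I. I \<subset> verts G}. sa (induced G I)))"

lemma Zs_split:
  assumes "finite (verts G)"
  shows "Zs G = sa G + (\<Sum>I\<in>{I. I \<subset> verts G}. sa (induced G I))"
proof -
  have P: "Pow (verts G) = insert (verts G) {I. I \<subset> verts G}" by auto
  have fin: "finite {I. I \<subset> verts G}" by (rule finite_subset[of _ "Pow (verts G)"]) (use assms in auto)
  have nm: "verts G \<notin> {I. I \<subset> verts G}" by simp
  have "Zs G = (\<Sum>I\<in>insert (verts G) {I. I \<subset> verts G}. sa (induced G I))" unfolding Zs_def P ..
  also have "\<dots> = sa (induced G (verts G)) + (\<Sum>I\<in>{I. I \<subset> verts G}. sa (induced G I))"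
    by (rule sum.insert[OF fin nm])
  finally show ?thesis by (simp only: sa_induced_self)
qed

lemma Zs_prod:
  assumes fin: "finite (verts G)" and sA: "sep G A"
  shows "Zs G = Zs (induced G A) * Zs (induced G (verts G - A))"
proof -
  let ?V = "verts G" and ?B = "verts G - A"
  have AV: "A \<subseteq> ?V" using sA by (simp add: sep_def)
  have split: "sa (induced G I) = sa (induced G (I \<inter> A)) * sa (induced G (I - A))" if I: "I \<subseteq> ?V" for I
  proof -
    have "sep (induced G I) (I \<inter> A)"
      unfolding sep_def
    proof (intro conjI ballI)
      fix x y assume x: "x \<in> I \<inter> A" and y: "y \<in> verts (induced G I) - I \<inter> A"
      show "\<not> adj (induced G I) x y"
      proof
        assume "adj (induced G I) x y"
        then have "adj G x y" using I by (auto simp: adj_def)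
        moreover have "y \<in> ?V - A" using y I by auto
        ultimately show False using sA x by (auto simp: sep_def)
      qed
    qed simp
    moreover have "finite I" using I fin finite_subset by blast
    ultimately have "sa (induced G I) = sa (induced (induced G I) (I \<inter> A)) * sa (induced (induced G I) (I - I \<inter> A))"
      using sep_prod[of "induced G I" "I \<inter> A"] by simp
    also have "\<dots> = sa (induced G (I \<inter> A)) * sa (induced G (I - A))"
    proof -
      have "I - I \<inter> A = I - A" by blast
      then show ?thesis by (simp add: induced_induced)
    qed
    finally show ?thesis .
  qed
  have finA: "finite A" using AV fin finite_subset by blast
  have aux: "\<And>a b. a \<subseteq> A \<Longrightarrow> b \<subseteq> verts G - A \<Longrightarrow> (a \<union> b) \<inter> A = a \<and> a \<union> b - A = b" by blast
  have "Zs (induced G A) * Zs (induced G ?B) = (\<Sum>J\<in>Pow A. sa (induced G J)) * (\<Sum>K\<in>Pow ?B. sa (induced G K))"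
    unfolding Zs_def by (simp add: induced_induced)
  also have "\<dots> = (\<Sum>J\<in>Pow A. \<Sum>K\<in>Pow ?B. sa (induced G J) * sa (induced G K))"
    by (simp add: sum_product)
  also have "\<dots> = (\<Sum>p\<in>Pow A \<times> Pow ?B. sa (induced G (fst p)) * sa (induced G (snd p)))"
    by (simp add: sum.cartesian_product split_def)
  also have "\<dots> = (\<Sum>I\<in>Pow ?V. sa (induced G (I \<inter> A)) * sa (induced G (I - A)))"
    by (rule sum.reindex_bij_witness[of _ "\<lambda>I. (I \<inter> A, I - A)" "\<lambda>p. fst p \<union> snd p"])
       (use AV in \<open>auto simp: aux\<close>)
  also have "\<dots> = Zs G" unfolding Zs_def by (rule sum.cong) (auto simp: split)
  finally show ?thesis by simp
qed

lemma Zs_ev: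
  assumes "finite (verts G)" "evg G" "verts G \<noteq> {}"
  shows "Zs G = 0"
  using assms
proof (induction "card (verts G)" arbitrary: G rule: less_induct)
  case less
  show ?case
  proof (cases "connected_graph G")
    case True
    have "even (card (verts G))" using evg_card less.prems(2) .
    then have "sa G = - (\<Sum>I\<in>{I. I \<subset> verts G}. sa (induced G I))"
      using True less.prems by (subst sa_eq) simp
    then show ?thesis using Zs_split[OF less.prems(1)] by simp
  next
    case False
    obtain A where A: "sep G A" "A \<noteq> {}" "A \<subset> verts G" using nontrivial_sep[OF False less.prems(3)] by blast
    have finA: "finite A" using A(3) less.prems(1) finite_subset by blast
    have cA: "card A < card (verts G)" using A(3) less.prems(1) psubset_card_mono by blast
    have "Zs (induced G A) = 0"
      using less.hyps[of "induced G A"] cA finA A(2) evg_induced_sep[OF A(1) less.prems(2)] by simp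
    then show ?thesis using Zs_prod[OF less.prems(1) A(1)] by simp
  qed
qed

lemma f_ev:
  assumes "finite (verts G)" "evg G"
  shows "f G = sa G"
proof (cases "verts G = {}")
  case True then show ?thesis by (simp add: f_def sa_empty)
next
  case False
  then have "Zs G = 0" using Zs_ev assms by blast
  then show ?thesis using Zs_split[OF assms(1)] False by (simp add: f_def)
qed

lemma f_nev:
  assumes "finite (verts G)" "\<not> evg G"
  shows "f G = - Zs G"
proof -
  have ne: "verts G \<noteq> {}" using assms(2) evg_empty by blast
  have "sa G = 0" using sa_nev assms by blast
  then show ?thesis using Zs_split[OF assms(1)] ne by (simp add: f_def)
qed

lemma f_induced_self: "f (induced G (verts G)) = f G"
proof -
  have "(\<Sum>I\<in>{I. I \<subset> verts G}. sa (induced (induced G (verts G)) I)) = (\<Sum>I\<in>{I. I \<subset> verts G}. sa (induced G I))"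
    by (rule sum.cong) (auto simp: induced_induced)
  then show ?thesis by (simp add: f_def)
qed

lemma f_empty: "verts G = {} \<Longrightarrow> f G = 1"
  by (simp add: f_def)



function mu :: "'a set set \<Rightarrow> 'a set \<Rightarrow> 'a set \<Rightarrow> int" where
  "mu P X Y = (if Y = X then 1 else if finite Y \<and> X \<subset> Y
      then - (\<Sum>Z\<in>{Z\<in>P. X \<subseteq> Z \<and> Z \<subset> Y}. mu P X Z) else 0)"
  by pat_completeness auto
termination
  by (relation "measure (\<lambda>(P,X,Y). card Y)") (auto intro: psubset_card_mono)

declare mu.simps[simp del]

lemma mu_refl[simp]: "mu P X X = 1"
  by (subst mu.simps) simp

lemma mu_step: "finite Y \<Longrightarrow> X \<subset> Y \<Longrightarrow> mu P X Y = - (\<Sum>Z\<in>{Z\<in>P. X \<subseteq> Z \<and> Z \<subset> Y}. mu P X Z)"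
  by (subst mu.simps) auto

lemma fin_between: "finite Y \<Longrightarrow> finite {Z\<in>P. Q Z \<and> Z \<subseteq> Y}"
  by (rule finite_subset[of _ "Pow Y"]) auto

lemma fin_between2: "finite Y \<Longrightarrow> finite {Z\<in>P. Q Z \<and> Z \<subset> Y}"
  by (rule finite_subset[of _ "Pow Y"]) auto

lemma mu_rec:
  assumes "finite Y" "X \<subset> Y" "Y \<in> P"
  shows "(\<Sum>Z\<in>{Z\<in>P. X \<subseteq> Z \<and> Z \<subseteq> Y}. mu P X Z) = 0"
proof -
  have eq: "{Z\<in>P. X \<subseteq> Z \<and> Z \<subseteq> Y} = insert Y {Z\<in>P. X \<subseteq> Z \<and> Z \<subset> Y}" using assms by auto
  have nm: "Y \<notin> {Z\<in>P. X \<subseteq> Z \<and> Z \<subset> Y}" by simp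
  show ?thesis unfolding eq sum.insert[OF fin_between2[OF assms(1)] nm] mu_step[OF assms(1,2)] by simp
qed

lemma mu_unique:
  assumes fin: "finite Y0" and XP: "X \<in> P" and g1: "g X = 1"
    and rec: "\<And>Y. Y \<in> P \<Longrightarrow> X \<subset> Y \<Longrightarrow> Y \<subseteq> Y0 \<Longrightarrow> (\<Sum>Z\<in>{Z\<in>P. X \<subseteq> Z \<and> Z \<subseteq> Y}. g Z) = 0"
  shows "Y \<in> P \<Longrightarrow> X \<subseteq> Y \<Longrightarrow> Y \<subseteq> Y0 \<Longrightarrow> g Y = mu P X Y"
proof (induction "card Y" arbitrary: Y rule: less_induct)
  case less
  show ?case
  proof (cases "Y = X")
    case True then show ?thesis using g1 by simp
  next
    case False
    then have XY: "X \<subset> Y" using less.prems by blast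
    have finY: "finite Y" using less.prems(3) fin finite_subset by blast
    have eq: "{Z\<in>P. X \<subseteq> Z \<and> Z \<subseteq> Y} = insert Y {Z\<in>P. X \<subseteq> Z \<and> Z \<subset> Y}" using less.prems XY by auto
    have nm: "Y \<notin> {Z\<in>P. X \<subseteq> Z \<and> Z \<subset> Y}" by simp
    have "g Y + (\<Sum>Z\<in>{Z\<in>P. X \<subseteq> Z \<and> Z \<subset> Y}. g Z) = 0"
      using rec[OF less.prems(1) XY less.prems(3)] unfolding eq sum.insert[OF fin_between2[OF finY] nm] .
    moreover have "(\<Sum>Z\<in>{Z\<in>P. X \<subseteq> Z \<and> Z \<subset> Y}. g Z) = (\<Sum>Z\<in>{Z\<in>P. X \<subseteq> Z \<and> Z \<subset> Y}. mu P X Z)"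
    proof (rule sum.cong[OF refl])
      fix Z assume Z: "Z \<in> {Z\<in>P. X \<subseteq> Z \<and> Z \<subset> Y}"
      then have "card Z < card Y" using finY psubset_card_mono by blast
      moreover have "Z \<subseteq> Y0" using Z less.prems(3) by blast
      ultimately show "g Z = mu P X Z" using less.hyps[of Z] Z by blast
    qed
    ultimately show ?thesis using mu_step[OF finY XY] by simp
  qed
qed

definition nu :: "'a set set \<Rightarrow> 'a set \<Rightarrow> 'a set \<Rightarrow> int" where
  "nu Q X S = - (\<Sum>Z\<in>{Z\<in>Q. X \<subseteq> Z \<and> Z \<subset> S}. mu Q X Z)"

lemma nu_mu: "finite Y \<Longrightarrow> X \<subset> Y \<Longrightarrow> nu Q X Y = mu Q X Y"
  by (simp add: nu_def mu_step)

lemma mu_del: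
  assumes fin: "finite Y0" and QP: "Q \<subseteq> P" and XQ: "X \<in> Q" and YP: "Y \<in> P" and XY: "X \<subset> Y" and Y0: "Y \<subseteq> Y0"
  shows "mu P X Y = nu Q X Y + (\<Sum>S\<in>{S\<in>P - Q. X \<subset> S \<and> S \<subset> Y}. nu Q X S * mu P S Y)"
proof -
  define g where "g Y = (if Y = X then 1 else nu Q X Y + (\<Sum>S\<in>{S\<in>P - Q. X \<subset> S \<and> S \<subset> Y}. nu Q X S * mu P S Y))" for Y
  have XP: "X \<in> P" using XQ QP by blast
  have "g Y = mu P X Y"
  proof (rule mu_unique[OF fin XP _ _ YP _ Y0])
    show "g X = 1" by (simp add: g_def)
    show "X \<subseteq> Y" using XY by blast
  next
    fix Y assume YP: "Y \<in> P" and XY: "X \<subset> Y" and YY0: "Y \<subseteq> Y0"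
    have finY: "finite Y" using YY0 fin finite_subset by blast
    let ?T' = "{Z\<in>P. X \<subset> Z \<and> Z \<subseteq> Y}"
    let ?SA = "{S\<in>P - Q. X \<subset> S \<and> S \<subset> Y}"
    have finT': "finite ?T'" by (rule fin_between[OF finY])
    have finSA: "finite ?SA" by (rule fin_between2[OF finY])
    have eqT: "{Z\<in>P. X \<subseteq> Z \<and> Z \<subseteq> Y} = insert X ?T'" using XY XP by auto
    have nmX: "X \<notin> ?T'" by simp
    have sumT: "(\<Sum>Z\<in>{Z\<in>P. X \<subseteq> Z \<and> Z \<subseteq> Y}. g Z) = 1 + (\<Sum>Z\<in>?T'. g Z)"
      unfolding eqT sum.insert[OF finT' nmX] by (simp add: g_def)
    have gT': "(\<Sum>Z\<in>?T'. g Z) = (\<Sum>Z\<in>?T'. nu Q X Z) + (\<Sum>Z\<in>?T'. \<Sum>S\<in>{S\<in>P - Q. X \<subset> S \<and> S \<subset> Z}. nu Q X S * mu P S Z)"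
      unfolding sum.distrib[symmetric] by (rule sum.cong) (auto simp: g_def)
    have D: "(\<Sum>Z\<in>?T'. \<Sum>S\<in>{S\<in>P - Q. X \<subset> S \<and> S \<subset> Z}. nu Q X S * mu P S Z) = - (\<Sum>S\<in>?SA. nu Q X S)"
    proof -
      have "(\<Sum>Z\<in>?T'. \<Sum>S\<in>{S\<in>P - Q. X \<subset> S \<and> S \<subset> Z}. nu Q X S * mu P S Z)
          = (\<Sum>Z\<in>?T'. \<Sum>S\<in>{S. S \<in> ?SA \<and> S \<subset> Z}. nu Q X S * mu P S Z)"
      proof (rule sum.cong[OF refl])
        fix Z assume "Z \<in> ?T'"
        then have "{S\<in>P - Q. X \<subset> S \<and> S \<subset> Z} = {S. S \<in> ?SA \<and> S \<subset> Z}" by auto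
        then show "(\<Sum>S\<in>{S\<in>P - Q. X \<subset> S \<and> S \<subset> Z}. nu Q X S * mu P S Z) = (\<Sum>S\<in>{S. S \<in> ?SA \<and> S \<subset> Z}. nu Q X S * mu P S Z)" by simp
      qed
      also have "\<dots> = (\<Sum>S\<in>?SA. \<Sum>Z\<in>{Z. Z \<in> ?T' \<and> S \<subset> Z}. nu Q X S * mu P S Z)"
        by (rule sum.swap_restrict[OF finT' finSA])
      also have "\<dots> = (\<Sum>S\<in>?SA. nu Q X S * (-1))"
      proof (rule sum.cong[OF refl])
        fix S assume S: "S \<in> ?SA"
        have SP: "S \<in> P" and SY: "S \<subset> Y" and XS: "X \<subset> S" using S by auto
        have e1: "{Z. Z \<in> ?T' \<and> S \<subset> Z} = {Z\<in>P. S \<subset> Z \<and> Z \<subseteq> Y}" using XS by auto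
        have e2: "{Z\<in>P. S \<subseteq> Z \<and> Z \<subseteq> Y} = insert S {Z\<in>P. S \<subset> Z \<and> Z \<subseteq> Y}" using SP SY by auto
        have nmS: "S \<notin> {Z\<in>P. S \<subset> Z \<and> Z \<subseteq> Y}" by simp
        have "(\<Sum>Z\<in>{Z\<in>P. S \<subseteq> Z \<and> Z \<subseteq> Y}. mu P S Z) = 0" by (rule mu_rec[OF finY SY YP])
        then have "1 + (\<Sum>Z\<in>{Z\<in>P. S \<subset> Z \<and> Z \<subseteq> Y}. mu P S Z) = 0"
          unfolding e2 sum.insert[OF fin_between[OF finY] nmS] by simp
        then have "(\<Sum>Z\<in>{Z. Z \<in> ?T' \<and> S \<subset> Z}. mu P S Z) = -1" unfolding e1 by simp
        then show "(\<Sum>Z\<in>{Z. Z \<in> ?T' \<and> S \<subset> Z}. nu Q X S * mu P S Z) = nu Q X S * (-1)"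
          by (simp add: sum_distrib_left[symmetric])
      qed
      finally show ?thesis by (simp add: sum_negf)
    qed
    have eT': "?T' = insert Y {Z\<in>P. X \<subset> Z \<and> Z \<subset> Y}" using XY YP by auto
    have nmY: "Y \<notin> {Z\<in>P. X \<subset> Z \<and> Z \<subset> Y}" by simp
    have E1: "(\<Sum>Z\<in>?T'. nu Q X Z) = nu Q X Y + (\<Sum>Z\<in>{Z\<in>P. X \<subset> Z \<and> Z \<subset> Y}. nu Q X Z)"
      unfolding eT' by (rule sum.insert[OF fin_between2[OF finY] nmY])
    have eP: "{Z\<in>P. X \<subset> Z \<and> Z \<subset> Y} = {Z\<in>Q. X \<subset> Z \<and> Z \<subset> Y} \<union> ?SA" using QP by auto
    have E2: "(\<Sum>Z\<in>{Z\<in>P. X \<subset> Z \<and> Z \<subset> Y}. nu Q X Z) = (\<Sum>Z\<in>{Z\<in>Q. X \<subset> Z \<and> Z \<subset> Y}. nu Q X Z) + (\<Sum>Z\<in>?SA. nu Q X Z)"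
      unfolding eP by (rule sum.union_disjoint[OF fin_between2[OF finY] finSA]) auto
    have eQ: "{Z\<in>Q. X \<subseteq> Z \<and> Z \<subset> Y} = insert X {Z\<in>Q. X \<subset> Z \<and> Z \<subset> Y}" using XQ XY by auto
    have nmX2: "X \<notin> {Z\<in>Q. X \<subset> Z \<and> Z \<subset> Y}" by simp
    have F: "nu Q X Y = - (1 + (\<Sum>Z\<in>{Z\<in>Q. X \<subset> Z \<and> Z \<subset> Y}. nu Q X Z))"
    proof -
      have "(\<Sum>Z\<in>{Z\<in>Q. X \<subset> Z \<and> Z \<subset> Y}. mu Q X Z) = (\<Sum>Z\<in>{Z\<in>Q. X \<subset> Z \<and> Z \<subset> Y}. nu Q X Z)"
        by (rule sum.cong[OF refl]) (auto intro: nu_mu[symmetric] finite_subset[OF _ finY])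
      then show ?thesis unfolding nu_def[of Q X Y] eQ sum.insert[OF fin_between2[OF finY] nmX2] by simp
    qed
    show "(\<Sum>Z\<in>{Z\<in>P. X \<subseteq> Z \<and> Z \<subseteq> Y}. g Z) = 0"
      unfolding sumT gT' D E1 E2 F by simp
  qed
  moreover have "g Y = nu Q X Y + (\<Sum>S\<in>{S\<in>P - Q. X \<subset> S \<and> S \<subset> Y}. nu Q X S * mu P S Y)"
    unfolding g_def by (rule if_not_P) (use XY in blast)
  ultimately show ?thesis by simp
qed



definition Fam :: "'a graph \<Rightarrow> 'a set set" where
  "Fam G = {T. T \<subseteq> verts G \<and> evg (induced G T)} \<union> {verts G}"

lemma sum_Fam:
  assumes fin: "finite (verts G)" and R: "\<And>Z. R Z \<Longrightarrow> Z \<subset> verts G"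
  shows "(\<Sum>Z\<in>{Z\<in>Fam G. R Z}. sa (induced G Z)) = (\<Sum>Z\<in>{Z. R Z}. sa (induced G Z))"
proof (rule sum.mono_neutral_left)
  show "finite {Z. R Z}" by (rule finite_subset[of _ "Pow (verts G)"]) (use fin R in auto)
  show "{Z \<in> Fam G. R Z} \<subseteq> {Z. R Z}" by auto
  show "\<forall>i\<in>{Z. R Z} - {Z \<in> Fam G. R Z}. sa (induced G i) = 0"
  proof
    fix Z assume Z: "Z \<in> {Z. R Z} - {Z \<in> Fam G. R Z}"
    then have ZV: "Z \<subset> verts G" using R by auto
    then have "\<not> evg (induced G Z)" using Z by (auto simp: Fam_def)
    moreover have "finite Z" using ZV fin finite_subset by blast
    ultimately show "sa (induced G Z) = 0" using sa_nev[of "induced G Z"] by simp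
  qed
qed

lemma empty_Fam: "{} \<in> Fam G"
  by (auto simp: Fam_def evg_empty)

lemma V_Fam: "verts G \<in> Fam G"
  by (auto simp: Fam_def)

lemma mu_Fam:
  assumes fin: "finite (verts G)" and T: "T \<in> Fam G"
  shows "mu (Fam G) {} T = (if T = verts G then f G else sa (induced G T))"
proof -
  define g where "g T = (if T = verts G then f G else sa (induced G T))" for T
  have "g T = mu (Fam G) {} T"
  proof (rule mu_unique[OF fin empty_Fam _ _ T])
    show "g {} = 1" by (auto simp: g_def f_empty sa_empty)
    show "{} \<subseteq> T" by simp
    show "T \<subseteq> verts G" using T by (auto simp: Fam_def)
  next
    fix Y assume YF: "Y \<in> Fam G" and Yne: "{} \<subset> Y" and YV: "Y \<subseteq> verts G"
    show "(\<Sum>Z\<in>{Z \<in> Fam G. {} \<subseteq> Z \<and> Z \<subseteq> Y}. g Z) = 0"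
    proof (cases "Y = verts G")
      case True
      have eq: "{Z \<in> Fam G. {} \<subseteq> Z \<and> Z \<subseteq> Y} = insert (verts G) {Z \<in> Fam G. Z \<subset> verts G}"
        using True V_Fam[of G] by auto
      have nm: "verts G \<notin> {Z \<in> Fam G. Z \<subset> verts G}" by simp
      have finS: "finite {Z \<in> Fam G. Z \<subset> verts G}" using fin_between2[OF fin, of "Fam G" "\<lambda>_. True"] by simp
      have "(\<Sum>Z\<in>{Z \<in> Fam G. Z \<subset> verts G}. g Z) = (\<Sum>Z\<in>{Z \<in> Fam G. Z \<subset> verts G}. sa (induced G Z))"
        by (rule sum.cong) (auto simp: g_def)
      also have "\<dots> = (\<Sum>Z\<in>{Z. Z \<subset> verts G}. sa (induced G Z))" by (rule sum_Fam[OF fin]) simp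
      finally have s: "(\<Sum>Z\<in>{Z \<in> Fam G. Z \<subset> verts G}. g Z) = (\<Sum>Z\<in>{Z. Z \<subset> verts G}. sa (induced G Z))" .
      have ne: "verts G \<noteq> {}" using True Yne by blast
      show ?thesis unfolding eq sum.insert[OF finS nm] s using ne by (simp add: g_def f_def)
    next
      case False
      have YF': "evg (induced G Y)" using YF False by (auto simp: Fam_def)
      have finY: "finite Y" using YV fin finite_subset by blast
      have "(\<Sum>Z\<in>{Z \<in> Fam G. {} \<subseteq> Z \<and> Z \<subseteq> Y}. g Z) = (\<Sum>Z\<in>{Z \<in> Fam G. {} \<subseteq> Z \<and> Z \<subseteq> Y}. sa (induced G Z))"
        by (rule sum.cong) (use False YV in \<open>auto simp: g_def\<close>)
      also have "\<dots> = (\<Sum>Z\<in>{Z. {} \<subseteq> Z \<and> Z \<subseteq> Y}. sa (induced G Z))"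
        by (rule sum_Fam[OF fin]) (use False YV in auto)
      also have "\<dots> = (\<Sum>Z\<in>Pow Y. sa (induced (induced G Y) Z))"
        by (rule sum.cong) (auto simp: induced_induced)
      also have "\<dots> = Zs (induced G Y)" by (simp add: Zs_def)
      also have "\<dots> = 0" using Zs_ev[of "induced G Y"] finY YF' Yne by simp
      finally show ?thesis .
    qed
  qed
  then show ?thesis by (simp add: g_def)
qed

lemma reach_adj: "adj G x y \<Longrightarrow> reach G x y"
  using reach_step[OF reach_refl] .

definition contract :: "'a graph \<Rightarrow> 'a set \<Rightarrow> 'a graph" where
  "contract G S = (verts G - S, {{x,y} | x y. x \<in> verts G - S \<and> y \<in> verts G - S \<and> x \<noteq> y \<and>
       reach (induced G (S \<union> {x,y})) x y})"

lemma verts_contract[simp]: "verts (contract G S) = verts G - S"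
  by (simp add: contract_def verts_def)

lemma edges_contract_iff:
  "{x,y} \<in> edges (contract G S) \<longleftrightarrow> x \<in> verts G - S \<and> y \<in> verts G - S \<and> x \<noteq> y \<and> reach (induced G (S \<union> {x,y})) x y"
proof
  assume "{x,y} \<in> edges (contract G S)"
  then obtain a b where ab: "{x,y} = {a,b}" "a \<in> verts G - S" "b \<in> verts G - S" "a \<noteq> b"
    "reach (induced G (S \<union> {a,b})) a b"
    by (auto simp: contract_def edges_def)
  from ab(1) have "(x = a \<and> y = b) \<or> (x = b \<and> y = a)" by (auto simp: doubleton_eq_iff)
  then show "x \<in> verts G - S \<and> y \<in> verts G - S \<and> x \<noteq> y \<and> reach (induced G (S \<union> {x,y})) x y"
  proof
    assume "x = a \<and> y = b" then show ?thesis using ab by auto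
  next
    assume h: "x = b \<and> y = a"
    have "reach (induced G (S \<union> {a,b})) b a" using reach_sym[OF ab(5)] .
    moreover have "S \<union> {a,b} = S \<union> {b,a}" by auto
    ultimately show ?thesis using ab h by auto
  qed
next
  assume "x \<in> verts G - S \<and> y \<in> verts G - S \<and> x \<noteq> y \<and> reach (induced G (S \<union> {x,y})) x y"
  then show "{x,y} \<in> edges (contract G S)" by (auto simp: contract_def edges_def)
qed

lemma fin_simple_contract:
  assumes "finite (verts G)"
  shows "fin_simple_graph (contract G S)"
  unfolding fin_simple_graph_def
proof (intro conjI ballI)
  show "finite (verts (contract G S))" using assms by simp
next
  fix e assume "e \<in> edges (contract G S)"
  then obtain x y where e: "e = {x,y}" "x \<in> verts G - S" "y \<in> verts G - S" "x \<noteq> y"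
    by (auto simp: contract_def edges_def)
  then show "e \<subseteq> verts (contract G S)" "card e = 2" by auto
qed

definition att :: "'a graph \<Rightarrow> 'a set \<Rightarrow> 'a set \<Rightarrow> 'a set" where
  "att G S U = {s \<in> S. \<exists>x\<in>U. reach (induced G (S \<union> {x})) x s}"

lemma att_sub: "att G S U \<subseteq> S"
  by (auto simp: att_def)

lemma att_step:
  assumes "a \<in> att G S U" "b \<in> S" "{a,b} \<in> edges G"
  shows "b \<in> att G S U"
proof -
  obtain x where x: "x \<in> U" "reach (induced G (S \<union> {x})) x a" "a \<in> S" using assms(1) by (auto simp: att_def)
  have "adj (induced G (S \<union> {x})) a b" using assms(2,3) x(3) by (simp add: adj_induced)
  then have "reach (induced G (S \<union> {x})) x b" using reach_step[OF x(2)] by blast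
  then show ?thesis using x(1) assms(2) by (auto simp: att_def)
qed

lemma ext_sep:
  assumes SZ: "S \<subseteq> Z" and ZV: "Z \<subseteq> verts G"
    and sU: "sep (induced (contract G S) (Z - S)) U"
  shows "sep (induced G Z) (U \<union> att G S U)" "sep (induced G S) (att G S U)"
proof -
  have UW: "U \<subseteq> Z - S" using sU by (simp add: sep_def)
  have nadj: "\<And>x y. x \<in> U \<Longrightarrow> y \<in> Z - S - U \<Longrightarrow> {x,y} \<in> edges (contract G S) \<Longrightarrow> False"
  proof -
    fix x y assume "x \<in> U" "y \<in> Z - S - U" "{x,y} \<in> edges (contract G S)"
    then have "adj (induced (contract G S) (Z - S)) x y" using UW by (auto simp: adj_induced)
    then show False using sU \<open>x \<in> U\<close> \<open>y \<in> Z - S - U\<close> by (auto simp: sep_def)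
  qed
  show "sep (induced G Z) (U \<union> att G S U)"
    unfolding sep_def
  proof (intro conjI ballI)
    show "U \<union> att G S U \<subseteq> verts (induced G Z)" using UW att_sub[of G S U] SZ by auto
  next
    fix x y assume x: "x \<in> U \<union> att G S U" and y: "y \<in> verts (induced G Z) - (U \<union> att G S U)"
    show "\<not> adj (induced G Z) x y"
    proof
      assume a: "adj (induced G Z) x y"
      then have E: "{x,y} \<in> edges G" and yZ: "y \<in> Z" by (auto simp: adj_induced)
      show False
      proof (cases "y \<in> S")
        case True
        have "y \<in> att G S U"
        proof (cases "x \<in> U")
          case True
          have "adj (induced G (S \<union> {x})) x y" using E \<open>y \<in> S\<close> by (simp add: adj_induced)
          then have "reach (induced G (S \<union> {x})) x y" by (rule reach_adj)
          then show ?thesis using True \<open>y \<in> S\<close> by (auto simp: att_def)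
        next
          case False
          then have "x \<in> att G S U" using x by blast
          then show ?thesis by (rule att_step[OF _ \<open>y \<in> S\<close> E])
        qed
        then show False using y by blast
      next
        case False
        then have yW: "y \<in> Z - S - U" using y yZ by auto
        show False
        proof (cases "x \<in> U")
          case True
          have xW: "x \<in> verts G - S" "y \<in> verts G - S" using True UW yW ZV by auto
          have "x \<noteq> y" using True yW by blast
          moreover have "reach (induced G (S \<union> {x,y})) x y"
            using E by (intro reach_adj) (simp add: adj_induced)
          ultimately have "{x,y} \<in> edges (contract G S)" using xW by (simp add: edges_contract_iff)
          then show False using nadj True yW by blast
        next
          case xn: False
          then have xa: "x \<in> att G S U" using x by blast
          then obtain x0 where x0: "x0 \<in> U" "reach (induced G (S \<union> {x0})) x0 x" "x \<in> S" by (auto simp: att_def)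
          have r1: "reach (induced G (S \<union> {x0,y})) x0 x"
            by (rule reach_induced_sub[OF x0(2)]) auto
          have "adj (induced G (S \<union> {x0,y})) x y" using E x0(3) by (simp add: adj_induced)
          then have r2: "reach (induced G (S \<union> {x0,y})) x0 y" using reach_step[OF r1] by blast
          have xW: "x0 \<in> verts G - S" "y \<in> verts G - S" using x0(1) UW yW ZV by auto
          have "x0 \<noteq> y" using x0(1) yW by blast
          then have "{x0,y} \<in> edges (contract G S)" using xW r2 by (simp add: edges_contract_iff)
          then show False using nadj x0(1) yW by blast
        qed
      qed
    qed
  qed
  show "sep (induced G S) (att G S U)"
    unfolding sep_def
  proof (intro conjI ballI)
    show "att G S U \<subseteq> verts (induced G S)" using att_sub[of G S U] by simp
  next
    fix x y assume x: "x \<in> att G S U" and y: "y \<in> verts (induced G S) - att G S U"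
    show "\<not> adj (induced G S) x y"
    proof
      assume "adj (induced G S) x y"
      then have E: "{x,y} \<in> edges G" and yS: "y \<in> S" by (auto simp: adj_induced)
      have "y \<in> att G S U" by (rule att_step[OF x yS E])
      then show False using y by blast
    qed
  qed
qed

lemma evg_contract_iff:
  assumes fin: "finite (verts G)" and SZ: "S \<subseteq> Z" and ZV: "Z \<subseteq> verts G" and evS: "evg (induced G S)"
  shows "evg (induced G Z) \<longleftrightarrow> evg (induced (contract G S) (Z - S))"
proof
  assume evZ: "evg (induced G Z)"
  show "evg (induced (contract G S) (Z - S))"
    unfolding evg_def
  proof (intro allI impI)
    fix U assume sU: "sep (induced (contract G S) (Z - S)) U"
    have UW: "U \<subseteq> Z - S" using sU by (simp add: sep_def)
    have e1: "even (card (U \<union> att G S U))" using ext_sep(1)[OF SZ ZV sU] evZ by (simp add: evg_def)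
    have e2: "even (card (att G S U))" using ext_sep(2)[OF SZ ZV sU] evS by (simp add: evg_def)
    have finZ: "finite Z" using ZV fin finite_subset by blast
    have "card (U \<union> att G S U) = card U + card (att G S U)"
      by (rule card_Un_disjoint) (use UW att_sub[of G S U] finZ SZ in \<open>auto intro: finite_subset\<close>)
    then show "even (card U)" using e1 e2 by simp
  qed
next
  assume evW: "evg (induced (contract G S) (Z - S))"
  show "evg (induced G Z)"
    unfolding evg_def
  proof (intro allI impI)
    fix U assume sU: "sep (induced G Z) U"
    have UZ: "U \<subseteq> Z" using sU by (simp add: sep_def)
    have s1: "sep (induced G S) (U \<inter> S)"
      unfolding sep_def
    proof (intro conjI ballI)
      fix x y assume x: "x \<in> U \<inter> S" and y: "y \<in> verts (induced G S) - U \<inter> S"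
      show "\<not> adj (induced G S) x y"
      proof
        assume "adj (induced G S) x y"
        then have "adj (induced G Z) x y" using SZ by (auto simp: adj_induced)
        then show False using sU x y SZ by (auto simp: sep_def)
      qed
    qed auto
    have s2: "sep (induced (contract G S) (Z - S)) (U \<inter> (Z - S))"
      unfolding sep_def
    proof (intro conjI ballI)
      fix x y assume x: "x \<in> U \<inter> (Z - S)" and y: "y \<in> verts (induced (contract G S) (Z - S)) - U \<inter> (Z - S)"
      show "\<not> adj (induced (contract G S) (Z - S)) x y"
      proof
        assume "adj (induced (contract G S) (Z - S)) x y"
        then have "{x,y} \<in> edges (contract G S)" by (auto simp: adj_induced)
        then have "reach (induced G (S \<union> {x,y})) x y" by (simp add: edges_contract_iff)
        then have "reach (induced G Z) x y" by (rule reach_induced_sub) (use SZ x y in auto)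
        then have "y \<in> U" using reach_closed[OF sU] x by blast
        then show False using y by auto
      qed
    qed auto
    have finZ: "finite Z" using ZV fin finite_subset by blast
    have e1: "even (card (U \<inter> S))" using s1 evS by (simp add: evg_def)
    have e2: "even (card (U \<inter> (Z - S)))" using s2 evW by (simp add: evg_def)
    have "U = (U \<inter> S) \<union> (U \<inter> (Z - S))" using UZ by blast
    moreover have "card ((U \<inter> S) \<union> (U \<inter> (Z - S))) = card (U \<inter> S) + card (U \<inter> (Z - S))"
      by (rule card_Un_disjoint) (use finZ UZ in \<open>auto intro: finite_subset\<close>)
    ultimately show "even (card U)" using e1 e2 by simp
  qed
qed



lemma contract_connected:
  assumes fin: "finite (verts G)" and con: "connected_graph G" and SV: "S \<subseteq> verts G"
  shows "connected_graph (contract G S)"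
proof (rule sep_connected)
  fix U assume sU: "sep (contract G S) U"
  let ?G' = "contract G S"
  have sU': "sep (induced ?G' (verts G - S)) U" using sU sep_induced_self[of ?G'] by simp
  have "sep (induced G (verts G)) (U \<union> att G S U)" using ext_sep(1)[of S "verts G" G U] SV sU' by simp
  then have "sep G (U \<union> att G S U)" using sep_induced_self[of G] by simp
  then have h: "U \<union> att G S U = {} \<or> U \<union> att G S U = verts G" using connected_sep[OF con] by blast
  have h2: "U \<subseteq> verts G - S" using sU by (simp add: sep_def)
  have h3: "att G S U \<subseteq> S" by (rule att_sub)
  from h show "U = {} \<or> U = verts ?G'"
  proof
    assume "U \<union> att G S U = {}" then show ?thesis by blast
  next
    assume "U \<union> att G S U = verts G"
    then have "U = verts G - S" using h2 h3 by blast
    then show ?thesis by simp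
  qed
qed

lemma evg_contract:
  assumes fin: "finite (verts G)" and ev: "evg G" and SV: "S \<subseteq> verts G" and evS: "evg (induced G S)"
  shows "evg (contract G S)"
proof -
  have "evg (induced G (verts G)) \<longleftrightarrow> evg (induced (contract G S) (verts G - S))"
    by (rule evg_contract_iff[OF fin SV subset_refl evS])
  then show ?thesis using ev evg_induced_self[of G] evg_induced_self[of "contract G S"] by simp
qed

lemma Fam_contract_iff:
  assumes fin: "finite (verts G)" and SZ: "S \<subseteq> Z" and ZV: "Z \<subseteq> verts G" and evS: "evg (induced G S)"
  shows "Z \<in> Fam G \<longleftrightarrow> Z - S \<in> Fam (contract G S)"
proof -
  have e: "evg (induced G Z) \<longleftrightarrow> evg (induced (contract G S) (Z - S))"
    by (rule evg_contract_iff[OF fin SZ ZV evS])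
  have v: "Z = verts G \<longleftrightarrow> Z - S = verts G - S"
  proof
    assume "Z - S = verts G - S"
    then have "(Z - S) \<union> S = (verts G - S) \<union> S" by simp
    moreover have "(Z - S) \<union> S = Z" using SZ by blast
    moreover have "(verts G - S) \<union> S = verts G" using SZ ZV by blast
    ultimately show "Z = verts G" by simp
  qed simp
  show ?thesis unfolding Fam_def using e v ZV by auto
qed

lemma mu_Fam_upper:
  assumes fin: "finite (verts G)" and SV: "S \<subseteq> verts G" and evS: "evg (induced G S)"
    and T: "T \<in> Fam G" and ST: "S \<subseteq> T"
  shows "mu (Fam G) S T = mu (Fam (contract G S)) {} (T - S)"
proof -
  let ?G' = "contract G S"
  define g where "g T = mu (Fam ?G') {} (T - S)" for T
  have SF: "S \<in> Fam G" using SV evS by (simp add: Fam_def)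
  have TV: "T \<subseteq> verts G" using T by (auto simp: Fam_def)
  have "g T = mu (Fam G) S T"
  proof (rule mu_unique[OF fin SF _ _ T ST TV])
    show "g S = 1" by (simp add: g_def)
  next
    fix Y assume YF: "Y \<in> Fam G" and SY: "S \<subset> Y" and YV: "Y \<subseteq> verts G"
    have finY: "finite Y" using YV fin finite_subset by blast
    have "(\<Sum>Z\<in>{Z \<in> Fam G. S \<subseteq> Z \<and> Z \<subseteq> Y}. g Z) = (\<Sum>W\<in>{W \<in> Fam ?G'. {} \<subseteq> W \<and> W \<subseteq> Y - S}. mu (Fam ?G') {} W)"
    proof (rule sum.reindex_bij_witness[of _ "\<lambda>W. W \<union> S" "\<lambda>Z. Z - S"])
      fix Z assume Z: "Z \<in> {Z \<in> Fam G. S \<subseteq> Z \<and> Z \<subseteq> Y}"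
      then show "Z - S \<union> S = Z" by blast
      have "Z - S \<in> Fam ?G'" using Fam_contract_iff[OF fin _ _ evS, of Z] Z YV by auto
      then show "Z - S \<in> {W \<in> Fam ?G'. {} \<subseteq> W \<and> W \<subseteq> Y - S}" using Z by auto
      show "mu (Fam ?G') {} (Z - S) = g Z" by (simp add: g_def)
    next
      fix W assume W: "W \<in> {W \<in> Fam ?G'. {} \<subseteq> W \<and> W \<subseteq> Y - S}"
      then show "W \<union> S - S = W" by blast
      have WS: "(W \<union> S) - S = W" using W by blast
      have "W \<union> S \<in> Fam G" using Fam_contract_iff[OF fin _ _ evS, of "W \<union> S"] W YV SY WS by auto
      then show "W \<union> S \<in> {Z \<in> Fam G. S \<subseteq> Z \<and> Z \<subseteq> Y}" using W SY by auto
    qed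
    also have "\<dots> = 0"
    proof (rule mu_rec)
      show "finite (Y - S)" using finY by simp
      show "{} \<subset> Y - S" using SY by blast
      show "Y - S \<in> Fam ?G'" using Fam_contract_iff[OF fin _ YV evS] SY YF by auto
    qed
    finally show "(\<Sum>Z\<in>{Z \<in> Fam G. S \<subseteq> Z \<and> Z \<subseteq> Y}. g Z) = 0" .
  qed
  then show ?thesis by (simp add: g_def)
qed

lemma f_contract:
  assumes fin: "finite (verts G)" and SV: "S \<subseteq> verts G" and evS: "evg (induced G S)"
  shows "mu (Fam G) S (verts G) = f (contract G S)"
proof -
  have "mu (Fam G) S (verts G) = mu (Fam (contract G S)) {} (verts G - S)"
    by (rule mu_Fam_upper[OF fin SV evS V_Fam SV])
  also have "\<dots> = f (contract G S)"
    using mu_Fam[of "contract G S" "verts G - S"] fin V_Fam[of "contract G S"] by simp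
  finally show ?thesis .
qed

definition del :: "'a graph \<Rightarrow> 'a set \<Rightarrow> 'a graph" where
  "del G e = (verts G, edges G - {e})"

lemma verts_del[simp]: "verts (del G e) = verts G"
  by (simp add: del_def verts_def)

lemma edges_del[simp]: "edges (del G e) = edges G - {e}"
  by (simp add: del_def edges_def)

lemma evg_mono:
  assumes "verts G = verts H" "\<And>x y. adj H x y \<Longrightarrow> adj G x y" "evg H"
  shows "evg G"
  unfolding evg_def
proof (intro allI impI)
  fix U assume "sep G U"
  then have "sep H U" using assms(1,2) unfolding sep_def by (metis DiffI)
  then show "even (card U)" using assms(3) by (simp add: evg_def)
qed

lemma Fam_del_sub: "Fam (del G e) \<subseteq> Fam G"
proof
  fix T assume T: "T \<in> Fam (del G e)"
  show "T \<in> Fam G"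
  proof (cases "T = verts G")
    case True then show ?thesis by (simp add: V_Fam)
  next
    case False
    then have "T \<subseteq> verts G" "evg (induced (del G e) T)" using T by (auto simp: Fam_def)
    moreover have "evg (induced G T)"
      by (rule evg_mono[OF _ _ \<open>evg (induced (del G e) T)\<close>]) (auto simp: adj_induced)
    ultimately show ?thesis by (simp add: Fam_def)
  qed
qed

lemma del_formula:
  assumes fin: "finite (verts G)" and ne: "verts G \<noteq> {}"
  shows "f G = f (del G e) + (\<Sum>S\<in>{S\<in>Fam G - Fam (del G e). {} \<subset> S \<and> S \<subset> verts G}.
            f (induced (del G e) S) * f (contract G S))"
proof -
  let ?Q = "Fam (del G e)" and ?P = "Fam G" and ?V = "verts G"
  have m: "mu ?P {} ?V = nu ?Q {} ?V + (\<Sum>S\<in>{S\<in>?P - ?Q. {} \<subset> S \<and> S \<subset> ?V}. nu ?Q {} S * mu ?P S ?V)"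
    by (rule mu_del[OF fin Fam_del_sub empty_Fam V_Fam _ subset_refl]) (use ne in blast)
  have m1: "mu ?P {} ?V = f G" using mu_Fam[OF fin V_Fam] by simp
  have m2: "nu ?Q {} ?V = f (del G e)"
  proof -
    have "nu ?Q {} ?V = mu ?Q {} ?V" by (rule nu_mu[OF fin]) (use ne in blast)
    also have "\<dots> = f (del G e)" using mu_Fam[of "del G e" "verts G"] fin V_Fam[of "del G e"] by simp
    finally show ?thesis .
  qed
  have m3: "nu ?Q {} S * mu ?P S ?V = f (induced (del G e) S) * f (contract G S)"
    if S: "S \<in> {S\<in>?P - ?Q. {} \<subset> S \<and> S \<subset> ?V}" for S
  proof -
    have SV: "S \<subset> ?V" and Sne: "S \<noteq> {}" and SP: "S \<in> ?P" using S by auto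
    have evS: "evg (induced G S)" using SP SV by (auto simp: Fam_def)
    have finS: "finite S" using SV fin finite_subset by blast
    have "(\<Sum>Z\<in>{Z\<in>?Q. {} \<subseteq> Z \<and> Z \<subset> S}. mu ?Q {} Z) = (\<Sum>Z\<in>{Z\<in>?Q. {} \<subseteq> Z \<and> Z \<subset> S}. sa (induced (del G e) Z))"
    proof (rule sum.cong[OF refl])
      fix Z assume Z: "Z \<in> {Z\<in>?Q. {} \<subseteq> Z \<and> Z \<subset> S}"
      then have "Z \<noteq> verts (del G e)" using SV by auto
      then show "mu ?Q {} Z = sa (induced (del G e) Z)" using mu_Fam[of "del G e" Z] fin Z by simp
    qed
    also have "\<dots> = (\<Sum>Z\<in>{Z. {} \<subseteq> Z \<and> Z \<subset> S}. sa (induced (del G e) Z))"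
      by (rule sum_Fam) (use fin SV in auto)
    also have "\<dots> = (\<Sum>Z\<in>{Z. Z \<subset> verts (induced (del G e) S)}. sa (induced (induced (del G e) S) Z))"
      by (rule sum.cong) (auto simp: induced_induced)
    finally have "nu ?Q {} S = f (induced (del G e) S)" using Sne by (simp add: nu_def f_def)
    moreover have "mu ?P S ?V = f (contract G S)" by (rule f_contract[OF fin _ evS]) (use SV in blast)
    ultimately show ?thesis by simp
  qed
  have s: "(\<Sum>S\<in>{S\<in>?P - ?Q. {} \<subset> S \<and> S \<subset> ?V}. nu ?Q {} S * mu ?P S ?V) = (\<Sum>S\<in>{S\<in>?P - ?Q. {} \<subset> S \<and> S \<subset> ?V}. f (induced (del G e) S) * f (contract G S))"
    by (rule sum.cong[OF refl m3])
  show ?thesis using m unfolding m1 m2 s .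
qed



lemma component_connected:
  assumes "x \<in> verts G"
  shows "connected_graph (induced G (component G x))"
  unfolding connected_graph_def
proof (intro ballI)
  let ?C = "component G x"
  fix a b assume a: "a \<in> verts (induced G ?C)" and b: "b \<in> verts (induced G ?C)"
  have xC: "x \<in> ?C" using component_self[OF assms] .
  have "reach G x a" using a by (simp add: component_def)
  then have ra: "reach (induced G ?C) x a" using reach_closed_induced[OF component_sep xC] by blast
  have "reach G x b" using b by (simp add: component_def)
  then have rb: "reach (induced G ?C) x b" using reach_closed_induced[OF component_sep xC] by blast
  show "reach (induced G ?C) a b" using reach_trans[OF reach_sym[OF ra] rb] .
qed

lemma Zs_conn_even:
  assumes "finite (verts G)" "connected_graph G" "even (card (verts G))" "verts G \<noteq> {}"
  shows "Zs G = 0"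
  using Zs_ev connected_even_evg assms by blast

lemma induced_del_notsub: "\<not> e \<subseteq> R \<Longrightarrow> induced (del G e) R = induced G R"
  by (auto simp: induced_def del_def edges_def)

lemma adj_induced_del: "adj (induced (del G e) S) x y \<longleftrightarrow> {x,y} \<in> edges G \<and> {x,y} \<noteq> e \<and> x \<in> S \<and> y \<in> S"
  by (auto simp: adj_induced)

lemma lemT:
  assumes fin: "finite (verts G)" and e: "e = {u,v}" "u \<noteq> v"
    and SV: "S \<subseteq> verts G" and evS: "evg (induced G S)" and nev: "\<not> evg (induced (del G e) S)"
  shows "f (induced (del G e) S) = 0 \<or> (\<exists>C. C \<subseteq> S \<and> O1 (induced (del G e) C) \<and> O1 (induced (del G e) (S - C))
            \<and> f (induced (del G e) S) = - (f (induced (del G e) C) * f (induced (del G e) (S - C))))"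
proof -
  let ?Y = "induced (del G e) S"
  have finS: "finite S" using SV fin finite_subset by blast
  have uvS: "u \<in> S \<and> v \<in> S"
  proof (rule ccontr)
    assume h: "\<not> (u \<in> S \<and> v \<in> S)"
    have "evg ?Y"
    proof (rule evg_mono[OF _ _ evS])
      show "verts ?Y = verts (induced G S)" by simp
      fix x y assume "adj (induced G S) x y"
      then have "{x,y} \<in> edges G" "x \<in> S" "y \<in> S" by (auto simp: adj_induced)
      moreover have "{x,y} \<noteq> e" using h e \<open>x \<in> S\<close> \<open>y \<in> S\<close> by (auto simp: doubleton_eq_iff)
      ultimately show "adj ?Y x y" by (simp add: adj_induced_del)
    qed
    then show False using nev by simp
  qed
  have uY: "u \<in> verts ?Y" and vY: "v \<in> verts ?Y" using uvS by auto
  define C where "C = component ?Y u"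
  have sC: "sep ?Y C" unfolding C_def by (rule component_sep)
  have uC: "u \<in> C" unfolding C_def by (rule component_self[OF uY])
  have CS: "C \<subseteq> S" unfolding C_def using component_sub[of ?Y u] by simp
  have vC: "v \<notin> C"
  proof
    assume "v \<in> C"
    then have ruv: "reach ?Y u v" by (simp add: C_def component_def)
    have "evg ?Y"
      unfolding evg_def
    proof (intro allI impI)
      fix U assume sU: "sep ?Y U"
      have "sep (induced G S) U"
        unfolding sep_def
      proof (intro conjI ballI)
        show "U \<subseteq> verts (induced G S)" using sU by (simp add: sep_def)
      next
        fix x y assume x: "x \<in> U" and y: "y \<in> verts (induced G S) - U"
        show "\<not> adj (induced G S) x y"
        proof
          assume a: "adj (induced G S) x y"
          show False
          proof (cases "{x,y} = e")
            case False
            then have "adj ?Y x y" using a by (auto simp: adj_induced)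
            then show False using sU x y by (auto simp: sep_def)
          next
            case True
            then have "(x = u \<and> y = v) \<or> (x = v \<and> y = u)" using e by (auto simp: doubleton_eq_iff)
            then show False
            proof
              assume "x = u \<and> y = v"
              then show False using reach_closed[OF sU _ ruv] x y by auto
            next
              assume "x = v \<and> y = u"
              then show False using reach_closed[OF sU _ reach_sym[OF ruv]] x y by auto
            qed
          qed
        qed
      qed
      then show "even (card U)" using evS by (simp add: evg_def)
    qed
    then show False using nev by simp
  qed
  have fY: "f ?Y = - Zs ?Y" using f_nev[of ?Y] finS nev by simp
  have ZY: "Zs ?Y = Zs (induced (del G e) C) * Zs (induced (del G e) (S - C))"
    using Zs_prod[of ?Y C] finS sC CS by (simp add: induced_induced)
  have conC: "connected_graph (induced (del G e) C)"
    using component_connected[OF uY] CS by (simp add: C_def induced_induced)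
  have finC: "finite C" using CS finS finite_subset by blast
  show ?thesis
  proof (cases "even (card C)")
    case True
    have "Zs (induced (del G e) C) = 0" using Zs_conn_even[of "induced (del G e) C"] conC True finC uC by auto
    then show ?thesis using fY ZY by simp
  next
    case oddC: False
    define D where "D = component ?Y v"
    have sD: "sep ?Y D" unfolding D_def by (rule component_sep)
    have vD: "v \<in> D" unfolding D_def by (rule component_self[OF vY])
    have DS: "D \<subseteq> S" unfolding D_def using component_sub[of ?Y v] by simp
    have CD: "C \<inter> D = {}"
    proof (rule ccontr)
      assume "C \<inter> D \<noteq> {}"
      then obtain y where "y \<in> C" "y \<in> D" by blast
      then have "reach ?Y u y" "reach ?Y v y" by (auto simp: C_def D_def component_def)
      then have "reach ?Y u v" using reach_trans reach_sym by metis
      then have "v \<in> C" using vY by (simp add: C_def component_def)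
      then show False using vC by simp
    qed
    have conD: "connected_graph (induced (del G e) D)"
      using component_connected[OF vY] DS by (simp add: D_def induced_induced)
    show ?thesis
    proof (cases "S - C - D = {}")
      case True
      have SCD: "S - C = D" using True DS CD by blast
      have cS: "even (card S)" using evg_card[OF evS] by simp
      have cSC: "card (S - C) = card S - card C" using card_Diff_subset[OF finC CS] .
      have cCS: "card C \<le> card S" using card_mono[OF finS CS] .
      have oddD: "odd (card (S - C))" using cSC cCS cS oddC by (simp add: even_diff_nat) 
      have O1C: "O1 (induced (del G e) C)" using conC oddC by (simp add: O1_def)
      have O1D: "O1 (induced (del G e) (S - C))" using conD oddD SCD by (simp add: O1_def)
      have fC: "f (induced (del G e) C) = - Zs (induced (del G e) C)"
        using f_nev[of "induced (del G e) C"] finC odd_not_evg[of "induced (del G e) C"] oddC by simp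
      have fD: "f (induced (del G e) (S - C)) = - Zs (induced (del G e) (S - C))"
        using f_nev[of "induced (del G e) (S - C)"] finS odd_not_evg[of "induced (del G e) (S - C)"] oddD by simp
      have "f ?Y = - (f (induced (del G e) C) * f (induced (del G e) (S - C)))"
        using fY ZY fC fD by simp
      then show ?thesis using O1C O1D CS by blast
    next
      case False
      let ?R = "S - C - D"
      let ?Y' = "induced (del G e) (S - C)"
      have sD': "sep ?Y' D"
        unfolding sep_def
      proof (intro conjI ballI)
        show "D \<subseteq> verts ?Y'" using DS CD by auto
      next
        fix x y assume x: "x \<in> D" and y: "y \<in> verts ?Y' - D"
        show "\<not> adj ?Y' x y"
        proof
          assume "adj ?Y' x y"
          then have "adj ?Y x y" by (auto simp: adj_induced)
          then show False using sD x y by (auto simp: sep_def)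
        qed
      qed
      have DSC: "D \<subseteq> S - C" using DS CD by blast
      have ZY': "Zs ?Y' = Zs (induced (del G e) D) * Zs (induced (del G e) ?R)"
        using Zs_prod[of ?Y' D] finS sD' by (simp add: induced_induced[OF DSC] induced_induced[of "S - C - D" "S - C"] Diff_subset)
      have uR: "u \<notin> ?R" using uC by blast
      have eR: "induced (del G e) ?R = induced G ?R"
        by (rule induced_del_notsub) (use uR e in blast)
      have evR: "evg (induced G ?R)"
        unfolding evg_def
      proof (intro allI impI)
        fix U assume sU: "sep (induced G ?R) U"
        have "sep (induced G S) U"
          unfolding sep_def
        proof (intro conjI ballI)
          show "U \<subseteq> verts (induced G S)" using sU by (auto simp: sep_def)
        next
          fix x y assume x: "x \<in> U" and y: "y \<in> verts (induced G S) - U"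
          have xR: "x \<in> ?R" using sU x by (auto simp: sep_def)
          show "\<not> adj (induced G S) x y"
          proof
            assume a: "adj (induced G S) x y"
            show False
            proof (cases "y \<in> ?R")
              case True
              then have "adj (induced G ?R) x y" using a xR by (auto simp: adj_induced)
              then show False using sU x y True by (auto simp: sep_def)
            next
              case False
              have ne: "{x,y} \<noteq> e" using xR uC vD e by (auto simp: doubleton_eq_iff)
              then have aY: "adj ?Y x y" using a by (auto simp: adj_induced)
              have yCD: "y \<in> C \<or> y \<in> D" using False y by auto
              then show False
              proof
                assume "y \<in> C"
                then have "x \<in> C" using reach_closed[OF sC _ reach_adj[OF adj_sym[OF aY]]] by blast
                then show False using xR by blast
              next
                assume "y \<in> D"
                then have "x \<in> D" using reach_closed[OF sD _ reach_adj[OF adj_sym[OF aY]]] by blast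
                then show False using xR by blast
              qed
            qed
          qed
        qed
        then show "even (card U)" using evS by (simp add: evg_def)
      qed
      have finR: "finite ?R" using finS by simp
      have "Zs (induced G ?R) = 0" using Zs_ev[of "induced G ?R"] evR finR False by simp
      then show ?thesis using fY ZY ZY' eR by simp
    qed
  qed
qed



lemma lemT':
  assumes fin: "finite (verts G)" and e: "e = {u,v}" "u \<in> verts G" "v \<in> verts G"
    and O: "O1 G"
  shows "O1 (del G e) \<or> f (del G e) = 0"
proof -
  let ?Y = "del G e"
  have con: "connected_graph G" and oddV: "odd (card (verts G))" using O by (auto simp: O1_def)
  have adjY: "\<And>x y. adj ?Y x y \<longleftrightarrow> adj G x y \<and> {x,y} \<noteq> e" by (auto simp: adj_def)
  have uY: "u \<in> verts ?Y" and vY: "v \<in> verts ?Y" using e by auto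
  define C where "C = component ?Y u"
  have sC: "sep ?Y C" unfolding C_def by (rule component_sep)
  have uC: "u \<in> C" unfolding C_def by (rule component_self[OF uY])
  have CV: "C \<subseteq> verts G" unfolding C_def using component_sub[of ?Y u] by simp
  show ?thesis
  proof (cases "C = verts G")
    case True
    have "connected_graph ?Y"
      unfolding connected_graph_def
    proof (intro ballI)
      fix a b assume "a \<in> verts ?Y" "b \<in> verts ?Y"
      then have "reach ?Y u a" "reach ?Y u b" using True by (auto simp: C_def component_def)
      then show "reach ?Y a b" using reach_trans reach_sym by metis
    qed
    then show ?thesis using oddV by (simp add: O1_def)
  next
    case CnV: False
    have vC: "v \<notin> C"
    proof
      assume vC: "v \<in> C"
      have "sep G C"
        unfolding sep_def
      proof (intro conjI ballI)
        show "C \<subseteq> verts G" by (rule CV)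
      next
        fix x y assume x: "x \<in> C" and y: "y \<in> verts G - C"
        show "\<not> adj G x y"
        proof
          assume a: "adj G x y"
          have "{x,y} \<noteq> e" using x y uC vC e by (auto simp: doubleton_eq_iff)
          then have "adj ?Y x y" using a adjY by simp
          then show False using sC x y by (auto simp: sep_def)
        qed
      qed
      then show False using connected_sep[OF con] uC CnV by blast
    qed
    define D where "D = component ?Y v"
    have sD: "sep ?Y D" unfolding D_def by (rule component_sep)
    have vD: "v \<in> D" unfolding D_def by (rule component_self[OF vY])
    have DV: "D \<subseteq> verts G" unfolding D_def using component_sub[of ?Y v] by simp
    have CD: "C \<inter> D = {}"
    proof (rule ccontr)
      assume "C \<inter> D \<noteq> {}"
      then obtain y where "y \<in> C" "y \<in> D" by blast
      then have "reach ?Y u y" "reach ?Y v y" by (auto simp: C_def D_def component_def)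
      then have "reach ?Y u v" using reach_trans reach_sym by metis
      then have "v \<in> C" using vY by (simp add: C_def component_def)
      then show False using vC by simp
    qed
    have sCD: "sep G (C \<union> D)"
      unfolding sep_def
    proof (intro conjI ballI)
      show "C \<union> D \<subseteq> verts G" using CV DV by blast
    next
      fix x y assume x: "x \<in> C \<union> D" and y: "y \<in> verts G - (C \<union> D)"
      show "\<not> adj G x y"
      proof
        assume a: "adj G x y"
        have "{x,y} \<noteq> e" using y uC vD e by (auto simp: doubleton_eq_iff)
        then have aY: "adj ?Y x y" using a adjY by simp
        from x show False
        proof
          assume "x \<in> C" then have "y \<in> C" using reach_closed[OF sC _ reach_adj[OF aY]] by blast
          then show False using y by blast
        next
          assume "x \<in> D" then have "y \<in> D" using reach_closed[OF sD _ reach_adj[OF aY]] by blast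
          then show False using y by blast
        qed
      qed
    qed
    have CDV: "C \<union> D = verts G" using connected_sep[OF con sCD] uC by blast
    have VCD: "verts G - C = D" using CDV CD by blast
    have finC: "finite C" using CV fin finite_subset by blast
    have finD: "finite D" using DV fin finite_subset by blast
    have cs: "card C + card D = card (verts G)" using card_Un_disjoint[OF finC finD CD] CDV by simp
    have fY: "f ?Y = - Zs ?Y" using f_nev[of ?Y] fin odd_not_evg[of ?Y] oddV by simp
    have ZY: "Zs ?Y = Zs (induced ?Y C) * Zs (induced ?Y D)" using Zs_prod[of ?Y C] fin sC VCD by simp
    have conC: "connected_graph (induced ?Y C)" using component_connected[OF uY] by (simp add: C_def)
    have conD: "connected_graph (induced ?Y D)" using component_connected[OF vY] by (simp add: D_def)
    have "even (card C) \<or> even (card D)" using cs oddV by presburger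
    then have "Zs (induced ?Y C) = 0 \<or> Zs (induced ?Y D) = 0"
      using Zs_conn_even[of "induced ?Y C"] Zs_conn_even[of "induced ?Y D"] conC conD finC finD uC vD by auto
    then show ?thesis using fY ZY by auto
  qed
qed

definition claim :: "'a graph \<Rightarrow> bool" where
  "claim G \<longleftrightarrow> (evg G \<longrightarrow> 0 \<le> (-1::int)^(card (verts G) div 2) * f G) \<and>
                (O1 G \<longrightarrow> 0 \<le> (-1::int)^((card (verts G) + 1) div 2) * f G)"

lemma neg1_sq: "(-1::int)^p * (-1)^p = 1"
  by (induct p) auto

lemma sign_arith:
  fixes x y z :: int
  assumes "0 \<le> (-1)^p * x" "0 \<le> (-1)^q * y" "0 \<le> (-1)^r * z" "odd (m + p + q + r)"
  shows "0 \<le> (-1)^m * (- (x * y) * z)"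
proof -
  define X where "X = (-1::int)^p * x"
  define Y where "Y = (-1::int)^q * y"
  define Z where "Z = (-1::int)^r * z"
  have x: "x = (-1)^p * X" unfolding X_def by (simp add: mult.assoc[symmetric] neg1_sq)
  have y: "y = (-1)^q * Y" unfolding Y_def by (simp add: mult.assoc[symmetric] neg1_sq)
  have z: "z = (-1)^r * Z" unfolding Z_def by (simp add: mult.assoc[symmetric] neg1_sq)
  have o: "(-1::int)^(m + p + q + r) = -1" using assms(4) by simp
  have "(-1)^m * (- (x * y) * z) = - ((-1::int)^(m + p + q + r)) * (X * Y * Z)"
    unfolding x y z by (simp add: power_add algebra_simps)
  also have "\<dots> = X * Y * Z" using o by simp
  finally show ?thesis using assms(1-3) by (simp add: X_def[symmetric] Y_def[symmetric] Z_def[symmetric])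
qed

lemma fin_simple_induced: "fin_simple_graph G \<Longrightarrow> T \<subseteq> verts G \<Longrightarrow> fin_simple_graph (induced G T)"
  unfolding fin_simple_graph_def by (auto intro: finite_subset)

lemma fin_simple_del: "fin_simple_graph G \<Longrightarrow> fin_simple_graph (del G e)"
  unfolding fin_simple_graph_def by auto

lemma edge_form:
  assumes "fin_simple_graph G" "e \<in> edges G"
  obtains u v where "e = {u,v}" "u \<noteq> v" "u \<in> verts G" "v \<in> verts G"
proof -
  have "card e = 2" "e \<subseteq> verts G" using assms by (auto simp: fin_simple_graph_def)
  then obtain u v where "e = {u,v}" "u \<noteq> v" by (auto simp: card_2_iff)
  then show ?thesis using that \<open>e \<subseteq> verts G\<close> by auto
qed

lemma term_sign:
  fixes G :: "'a graph"
  assumes fsg: "fin_simple_graph G" and eE: "e \<in> edges G"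
    and IH: "\<And>H::'a graph. fin_simple_graph H \<Longrightarrow> card (verts H) < card (verts G) \<Longrightarrow> claim H"
    and SV: "S \<subseteq> verts G" and Sne: "S \<noteq> {}" and evS: "evg (induced G S)"
    and nev: "\<not> evg (induced (del G e) S)"
  shows "(evg G \<longrightarrow> 0 \<le> (-1::int)^(card (verts G) div 2) * (f (induced (del G e) S) * f (contract G S))) \<and>
         (O1 G \<longrightarrow> 0 \<le> (-1::int)^((card (verts G) + 1) div 2) * (f (induced (del G e) S) * f (contract G S)))"
proof -
  have fin: "finite (verts G)" using fsg by (simp add: fin_simple_graph_def)
  obtain u v where e: "e = {u,v}" "u \<noteq> v" "u \<in> verts G" "v \<in> verts G" using edge_form[OF fsg eE] by blast
  let ?n = "card (verts G)"
  have finS: "finite S" using SV fin finite_subset by blast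
  have evs: "even (card S)" using evg_card[OF evS] by simp
  have cS: "card S \<le> ?n" using card_mono[OF fin SV] .
  have cK: "card (verts (contract G S)) = ?n - card S" using card_Diff_subset[OF finS SV] by simp
  have cpos: "card S > 0" using Sne finS by (simp add: card_gt_0_iff)
  have ltK: "card (verts (contract G S)) < ?n" using cK cS cpos by simp
  have fsK: "fin_simple_graph (contract G S)" using fin_simple_contract[OF fin] .
  have clK: "claim (contract G S)" using IH fsK ltK by blast
  from lemT[OF fin e(1,2) SV evS nev]
  show ?thesis
  proof
    assume "f (induced (del G e) S) = 0" then show ?thesis by simp
  next
    assume "\<exists>C. C \<subseteq> S \<and> O1 (induced (del G e) C) \<and> O1 (induced (del G e) (S - C))
            \<and> f (induced (del G e) S) = - (f (induced (del G e) C) * f (induced (del G e) (S - C)))"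
    then obtain C where CS: "C \<subseteq> S" and O1C: "O1 (induced (del G e) C)" and O1D: "O1 (induced (del G e) (S - C))"
      and fY: "f (induced (del G e) S) = - (f (induced (del G e) C) * f (induced (del G e) (S - C)))" by blast
    let ?c = "card C" and ?d = "card (S - C)"
    have oc: "odd ?c" using O1C by (simp add: O1_def)
    have od: "odd ?d" using O1D by (simp add: O1_def)
    have finC: "finite C" using CS finS finite_subset by blast
    have Cne: "C \<noteq> {}" proof assume "C = {}" then show False using oc by simp qed
    have Dne: "S - C \<noteq> {}"
    proof
      assume h: "S - C = {}"
      have "card (S - C) = card ({}::'a set)" using h by (rule arg_cong)
      then show False using od by simp
    qed
    have cd: "?d = card S - ?c" using card_Diff_subset[OF finC CS] .
    have cc: "?c \<le> card S" using card_mono[OF finS CS] .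
    have ltC: "?c < ?n"
    proof -
      have "C \<subset> verts G" using CS SV Dne by blast
      then show ?thesis using psubset_card_mono[OF fin] by blast
    qed
    have ltD: "?d < ?n"
    proof -
      have "S - C \<subset> verts G" using CS SV Cne by blast
      then show ?thesis using psubset_card_mono[OF fin] by blast
    qed
    have fsd: "fin_simple_graph (del G e)" using fin_simple_del[OF fsg] .
    have clC: "claim (induced (del G e) C)"
      using IH[OF fin_simple_induced[OF fsd] ] CS SV ltC by auto
    have DV: "S - C \<subseteq> verts (del G e)" using SV by auto
    have clD: "claim (induced (del G e) (S - C))"
      using IH[OF fin_simple_induced[OF fsd DV]] ltD by simp
    have sC: "0 \<le> (-1::int)^((?c + 1) div 2) * f (induced (del G e) C)" using clC O1C by (simp add: claim_def)
    have sD: "0 \<le> (-1::int)^((?d + 1) div 2) * f (induced (del G e) (S - C))" using clD O1D by (simp add: claim_def)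
    obtain a where a: "?c = 2 * a + 1" using oc oddE by blast
    obtain b where b: "?d = 2 * b + 1" using od oddE by blast
    have sCD: "card S = 2 * a + 2 * b + 2" using a b cd cc by simp
    show ?thesis
    proof (intro conjI impI)
      assume evG: "evg G"
      have en: "even ?n" using evg_card[OF evG] .
      have evK: "evg (contract G S)" using evg_contract[OF fin evG SV evS] .
      have sK: "0 \<le> (-1::int)^(card (verts (contract G S)) div 2) * f (contract G S)" using clK evK by (simp add: claim_def)
      have ed: "even (?n - card S)" using en evs cS by (simp add: even_diff_nat)
      obtain k where k: "?n - card S = 2 * k" using ed evenE by blast
      have nn: "?n = 2 * a + 2 * b + 2 + 2 * k" using k sCD cS by simp
      have kk: "card (verts (contract G S)) = 2 * k" using cK k by simp
      have par: "odd (?n div 2 + (?c + 1) div 2 + (?d + 1) div 2 + card (verts (contract G S)) div 2)"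
        unfolding kk nn a b by presburger
      show "0 \<le> (-1::int)^(?n div 2) * (f (induced (del G e) S) * f (contract G S))"
        unfolding fY using sign_arith[OF sC sD sK par] by (simp add: mult.assoc)
    next
      assume OG: "O1 G"
      have on: "odd ?n" using OG by (simp add: O1_def)
      have con: "connected_graph G" using OG by (simp add: O1_def)
      have conK: "connected_graph (contract G S)" using contract_connected[OF fin con SV] .
      have odn: "odd (?n - card S)" using on evs cS by (simp add: even_diff_nat)
      obtain k where k: "?n - card S = 2 * k + 1" using odn oddE by blast
      have oK: "odd (card (verts (contract G S)))" using cK k by simp
      have OK: "O1 (contract G S)" using conK oK by (simp add: O1_def)
      have sK: "0 \<le> (-1::int)^((card (verts (contract G S)) + 1) div 2) * f (contract G S)" using clK OK by (simp add: claim_def)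
      have nn: "?n = 2 * a + 2 * b + 2 + 2 * k + 1" using k sCD cS by simp
      have kk: "card (verts (contract G S)) = 2 * k + 1" using cK k by simp
      have par: "odd ((?n + 1) div 2 + (?c + 1) div 2 + (?d + 1) div 2 + (card (verts (contract G S)) + 1) div 2)"
        unfolding kk nn a b by presburger
      show "0 \<le> (-1::int)^((?n + 1) div 2) * (f (induced (del G e) S) * f (contract G S))"
        unfolding fY using sign_arith[OF sC sD sK par] by (simp add: mult.assoc)
    qed
  qed
qed



lemma reach_noedge:
  assumes "edges G = {}" "reach G x y"
  shows "x = y"
  using assms(2) unfolding reach_def
proof (induction rule: rtranclp_induct)
  case base then show ?case by simp
next
  case (step y z) then show ?case using assms(1) by (simp add: adj_def)
qed

lemma finite_edges: "fin_simple_graph G \<Longrightarrow> finite (edges G)"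
  unfolding fin_simple_graph_def by (auto intro: finite_subset[of _ "Pow (verts G)"])

lemma claim_step:
  fixes G :: "'a graph"
  assumes IHv: "\<And>H::'a graph. fin_simple_graph H \<Longrightarrow> card (verts H) < n \<Longrightarrow> claim H"
  shows "fin_simple_graph G \<Longrightarrow> card (verts G) = n \<Longrightarrow> claim G"
proof (induction "card (edges G)" arbitrary: G rule: less_induct)
  case less
  have fsg: "fin_simple_graph G" using less.prems(1) .
  have fin: "finite (verts G)" using fsg by (simp add: fin_simple_graph_def)
  show ?case
  proof (cases "edges G = {}")
    case True
    show ?thesis unfolding claim_def
    proof (intro conjI impI)
      assume ev: "evg G"
      have "verts G = {}"
      proof (rule ccontr)
        assume "verts G \<noteq> {}" then obtain x where x: "x \<in> verts G" by blast
        have "sep G {x}" unfolding sep_def using x True by (auto simp: adj_def)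
        then have "even (card {x})" using ev unfolding evg_def by blast
        then show False by simp
      qed
      then show "0 \<le> (-1::int)^(card (verts G) div 2) * f G" by (simp add: f_empty)
    next
      assume O: "O1 G"
      have con: "connected_graph G" and od: "odd (card (verts G))" using O by (auto simp: O1_def)
      have "verts G \<noteq> {}" proof assume "verts G = {}" then show False using od by simp qed
      then obtain x where x: "x \<in> verts G" by blast
      have V1: "verts G = {x}"
      proof
        show "verts G \<subseteq> {x}"
        proof
          fix y assume "y \<in> verts G"
          then have "reach G x y" using con x by (simp add: connected_graph_def)
          then show "y \<in> {x}" using reach_noedge[OF True] by blast
        qed
      qed (use x in simp)
      have P: "{I. I \<subset> {x}} = {{}}" by auto
      have "f G = - sa (induced G {})" unfolding f_def V1 P by simp
      then have "f G = -1" by (simp add: sa_empty)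
      then show "0 \<le> (-1::int)^((card (verts G) + 1) div 2) * f G" using V1 by simp
    qed
  next
    case False
    then obtain e where eE: "e \<in> edges G" by blast
    obtain u v where e: "e = {u,v}" "u \<noteq> v" "u \<in> verts G" "v \<in> verts G" using edge_form[OF fsg eE] by blast
    have ne: "verts G \<noteq> {}" using e by blast
    let ?I = "{S\<in>Fam G - Fam (del G e). {} \<subset> S \<and> S \<subset> verts G}"
    have df: "f G = f (del G e) + (\<Sum>S\<in>?I. f (induced (del G e) S) * f (contract G S))"
      by (rule del_formula[OF fin ne])
    have fsd: "fin_simple_graph (del G e)" using fin_simple_del[OF fsg] .
    have ltE: "card (edges (del G e)) < card (edges G)"
      using card_Diff1_less[OF finite_edges[OF fsg] eE] by simp
    have cld: "claim (del G e)" using less.hyps[OF ltE fsd] less.prems(2) by simp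
    have IH: "\<And>H::'a graph. fin_simple_graph H \<Longrightarrow> card (verts H) < card (verts G) \<Longrightarrow> claim H"
      using IHv less.prems(2) by simp
    have terms: "(evg G \<longrightarrow> 0 \<le> (-1::int)^(card (verts G) div 2) * (f (induced (del G e) S) * f (contract G S))) \<and>
         (O1 G \<longrightarrow> 0 \<le> (-1::int)^((card (verts G) + 1) div 2) * (f (induced (del G e) S) * f (contract G S)))"
      if S: "S \<in> ?I" for S
    proof -
      have SV: "S \<subseteq> verts G" and SnV: "S \<noteq> verts G" and Sne: "S \<noteq> {}" and SF: "S \<in> Fam G"
        and SnF: "S \<notin> Fam (del G e)" using S by auto
      have evS: "evg (induced G S)" using SF SnV by (auto simp: Fam_def)
      have nev: "\<not> evg (induced (del G e) S)" using SnF SV by (auto simp: Fam_def)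
      show ?thesis by (rule term_sign[OF fsg eE IH SV Sne evS nev])
    qed
    show ?thesis unfolding claim_def
    proof (intro conjI impI)
      assume ev: "evg G"
      let ?s = "(-1::int)^(card (verts G) div 2)"
      have t1: "0 \<le> ?s * f (del G e)"
      proof (cases "evg (del G e)")
        case True then show ?thesis using cld by (simp add: claim_def)
      next
        case False
        have nevV: "\<not> evg (induced (del G e) (verts G))" using False evg_induced_self[of "del G e"] by simp
        have evV: "evg (induced G (verts G))" using ev evg_induced_self[of G] by simp
        have "0 \<le> ?s * (f (induced (del G e) (verts G)) * f (contract G (verts G)))"
          using term_sign[OF fsg eE IH subset_refl ne evV nevV] ev by blast
        moreover have "f (induced (del G e) (verts G)) = f (del G e)" using f_induced_self[of "del G e"] by simp
        moreover have "f (contract G (verts G)) = 1" by (simp add: f_empty)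
        ultimately show ?thesis by simp
      qed
      have t2: "0 \<le> ?s * (\<Sum>S\<in>?I. f (induced (del G e) S) * f (contract G S))"
        unfolding sum_distrib_left by (rule sum_nonneg) (use terms ev in blast)
      show "0 \<le> ?s * f G" unfolding df using t1 t2 by (simp add: distrib_left)
    next
      assume O: "O1 G"
      let ?s = "(-1::int)^((card (verts G) + 1) div 2)"
      have t1: "0 \<le> ?s * f (del G e)"
      proof -
        from lemT'[OF fin e(1,3,4) O] show ?thesis
        proof
          assume "O1 (del G e)" then show ?thesis using cld by (simp add: claim_def)
        next
          assume "f (del G e) = 0" then show ?thesis by simp
        qed
      qed
      have t2: "0 \<le> ?s * (\<Sum>S\<in>?I. f (induced (del G e) S) * f (contract G S))"
        unfolding sum_distrib_left by (rule sum_nonneg) (use terms O in blast)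
      show "0 \<le> ?s * f G" unfolding df using t1 t2 by (simp add: distrib_left)
    qed
  qed
qed

lemma claim_all:
  fixes G :: "'a graph"
  shows "fin_simple_graph G \<Longrightarrow> claim G"
proof (induction "card (verts G)" arbitrary: G rule: less_induct)
  case less
  show ?case by (rule claim_step[OF _ less.prems refl]) (use less.hyps in blast)
qed

lemma neg1_cases: "(-1::int)^n = 1 \<or> (-1::int)^n = -1"
  by (induct n) auto

lemma mono_step:
  fixes G :: "'a graph"
  assumes fsg: "fin_simple_graph G" and eE: "e \<in> edges G" and ev: "evg G" and evd: "evg (del G e)"
  shows "\<bar>sa (del G e)\<bar> \<le> \<bar>sa G\<bar>"
proof -
  have fin: "finite (verts G)" using fsg by (simp add: fin_simple_graph_def)
  obtain u v where e: "e = {u,v}" "u \<noteq> v" "u \<in> verts G" "v \<in> verts G" using edge_form[OF fsg eE] by blast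
  have ne: "verts G \<noteq> {}" using e by blast
  let ?I = "{S\<in>Fam G - Fam (del G e). {} \<subset> S \<and> S \<subset> verts G}"
  let ?s = "(-1::int)^(card (verts G) div 2)"
  have df: "f G = f (del G e) + (\<Sum>S\<in>?I. f (induced (del G e) S) * f (contract G S))"
    by (rule del_formula[OF fin ne])
  have IH: "\<And>H::'a graph. fin_simple_graph H \<Longrightarrow> card (verts H) < card (verts G) \<Longrightarrow> claim H"
    using claim_all by blast
  have t1: "0 \<le> ?s * f (del G e)" using claim_all[OF fin_simple_del[OF fsg]] evd by (simp add: claim_def)
  have terms: "0 \<le> ?s * (f (induced (del G e) S) * f (contract G S))" if S: "S \<in> ?I" for S
  proof -
    have SV: "S \<subseteq> verts G" and SnV: "S \<noteq> verts G" and Sne: "S \<noteq> {}" and SF: "S \<in> Fam G"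
      and SnF: "S \<notin> Fam (del G e)" using S by auto
    have evS: "evg (induced G S)" using SF SnV by (auto simp: Fam_def)
    have nev: "\<not> evg (induced (del G e) S)" using SnF SV by (auto simp: Fam_def)
    show ?thesis using term_sign[OF fsg eE IH SV Sne evS nev] ev by blast
  qed
  have t2: "0 \<le> ?s * (\<Sum>S\<in>?I. f (induced (del G e) S) * f (contract G S))"
    unfolding sum_distrib_left by (rule sum_nonneg) (use terms in blast)
  have fG: "f G = sa G" using f_ev[OF fin ev] .
  have fd: "f (del G e) = sa (del G e)" using f_ev[of "del G e"] fin evd by simp
  have main: "?s * sa (del G e) \<le> ?s * sa G" and pos: "0 \<le> ?s * sa (del G e)"
    using df t1 t2 fG fd by (simp_all add: distrib_left)
  from neg1_cases[of "card (verts G) div 2"] show ?thesis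
  proof
    assume "?s = 1" then show ?thesis using main pos by simp
  next
    assume "?s = -1" then show ?thesis using main pos by simp
  qed
qed

lemma span_mono:
  fixes G H :: "'a graph"
  assumes fsH: "fin_simple_graph H" and fsG: "fin_simple_graph G" and vv: "verts H = verts G"
    and ee: "edges H \<subseteq> edges G"
  shows "\<bar>sa H\<bar> \<le> \<bar>sa G\<bar>"
proof (cases "evg H")
  case False
  have "sa H = 0" using sa_nev[OF _ False] fsH by (simp add: fin_simple_graph_def)
  then show ?thesis by simp
next
  case evH: True
  have "\<And>G::'a graph. fin_simple_graph G \<Longrightarrow> verts G = verts H \<Longrightarrow> edges H \<subseteq> edges G \<Longrightarrow> \<bar>sa H\<bar> \<le> \<bar>sa G\<bar>"
  proof -
    fix G :: "'a graph"
    show "fin_simple_graph G \<Longrightarrow> verts G = verts H \<Longrightarrow> edges H \<subseteq> edges G \<Longrightarrow> \<bar>sa H\<bar> \<le> \<bar>sa G\<bar>"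
    proof (induction "card (edges G - edges H)" arbitrary: G rule: less_induct)
      case less
      show ?case
      proof (cases "edges G - edges H = {}")
        case True
        then have "edges G = edges H" using less.prems(3) by blast
        then have "G = H" using less.prems(2) by (simp add: verts_def edges_def prod_eq_iff)
        then show ?thesis by simp
      next
        case False
        then obtain e where e: "e \<in> edges G" "e \<notin> edges H" by blast
        let ?G1 = "del G e"
        have fs1: "fin_simple_graph ?G1" using fin_simple_del[OF less.prems(1)] .
        have v1: "verts ?G1 = verts H" using less.prems(2) by simp
        have e1: "edges H \<subseteq> edges ?G1" using e less.prems(3) by auto
        have eq: "edges ?G1 - edges H = (edges G - edges H) - {e}" by auto
        have lt: "card (edges ?G1 - edges H) < card (edges G - edges H)"
          unfolding eq by (rule card_Diff1_less) (use finite_edges[OF less.prems(1)] e in auto)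
        have h1: "\<bar>sa H\<bar> \<le> \<bar>sa ?G1\<bar>" using less.hyps[OF lt fs1 v1 e1] .
        have evG1: "evg ?G1"
          by (rule evg_mono[OF _ _ evH]) (use v1 e1 in \<open>auto simp: adj_def\<close>)
        have evG: "evg G"
          by (rule evg_mono[OF _ _ evH]) (use less.prems(2,3) in \<open>auto simp: adj_def\<close>)
        have h2: "\<bar>sa ?G1\<bar> \<le> \<bar>sa G\<bar>" by (rule mono_step[OF less.prems(1) e(1) evG evG1])
        show ?thesis using h1 h2 by simp
      qed
    qed
  qed
  then show ?thesis using fsG vv ee by simp
qed

theorem mainTheorem9:
  fixes G H :: "'a graph"
  assumes "subgraph H G"
  shows "(\<forall>i. a_i H i \<le> a_i G i) \<and> (spanning_subgraph H G \<longrightarrow> a_num H \<le> a_num G)"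
proof
  have fsH: "fin_simple_graph H" and fsG: "fin_simple_graph G" and vs: "verts H \<subseteq> verts G"
    and es: "edges H \<subseteq> edges G" using assms by (auto simp: subgraph_def)
  have key: "a_num (induced H I) \<le> a_num (induced G I)" if I: "I \<subseteq> verts H" for I
  proof -
    have IG: "I \<subseteq> verts G" using I vs by blast
    have "\<bar>sa (induced H I)\<bar> \<le> \<bar>sa (induced G I)\<bar>"
      by (rule span_mono[OF fin_simple_induced[OF fsH I] fin_simple_induced[OF fsG IG]]) (use es in auto)
    then show ?thesis by (simp add: a_num_def nat_mono)
  qed
  show "\<forall>i. a_i H i \<le> a_i G i"
  proof
    fix i
    have "a_i H i = (\<Sum>I\<in>{I. I \<subseteq> verts H \<and> card I = 2 * i}. a_num (induced H I))" by (simp add: a_i_def)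
    also have "\<dots> \<le> (\<Sum>I\<in>{I. I \<subseteq> verts H \<and> card I = 2 * i}. a_num (induced G I))"
      by (rule sum_mono) (use key in auto)
    also have "\<dots> \<le> (\<Sum>I\<in>{I. I \<subseteq> verts G \<and> card I = 2 * i}. a_num (induced G I))"
    proof (rule sum_mono2)
      show "finite {I. I \<subseteq> verts G \<and> card I = 2 * i}"
        by (rule finite_subset[of _ "Pow (verts G)"]) (use fsG in \<open>auto simp: fin_simple_graph_def\<close>)
      show "{I. I \<subseteq> verts H \<and> card I = 2 * i} \<subseteq> {I. I \<subseteq> verts G \<and> card I = 2 * i}" using vs by auto
    qed simp
    also have "\<dots> = a_i G i" by (simp add: a_i_def)
    finally show "a_i H i \<le> a_i G i" .
  qed
  show "spanning_subgraph H G \<longrightarrow> a_num H \<le> a_num G"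
  proof
    assume "spanning_subgraph H G"
    then have vv: "verts H = verts G" by (simp add: spanning_subgraph_def)
    have "\<bar>sa H\<bar> \<le> \<bar>sa G\<bar>" by (rule span_mono[OF fsH fsG vv es])
    then show "a_num H \<le> a_num G" by (simp add: a_num_def nat_mono)
  qed
qed


end
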